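(* Let $G=(V,E)$ be a Cayley graph of a finitely generated group. There are positive constants $\alpha_D,\beta_D,\gamma_D,\alpha_N,\gamma_N$ (depending on $G$) such that: (i) for every finite connected subgraph $G'$ of $G$, $$\lambda^A(G')\ge\frac{\alpha_D}{\phi(\beta_D|G'|)^2}\quad\text{and}\quad \lambda^N(G')\ge\frac{\alpha_N}{|G'|^2}$$ (the latter whenever $\Delta^N(G')$ has a non-zero eigenvalue); (ii) for every positive integer $n$, $$\lambda^D(B(n))\le\frac{\gamma_D V(n)}{n^2\,V(\lfloor n/2\rfloor)}\quad\text{and}\quad\lambda^N(L_n)\le\frac{\gamma_N}{n^2},$$ where $L_n$ is any subgraph of $G$ which is a path (linear graph) with $n$ vertices.
   Context: $G$ is the Cayley graph with respect to a finite symmetric generating set $S$ not containing the identity $\iota$; $k=|S|$. $B(n)$ is the ball of radius $n$ around $\iota$ (regarded as the induced subgraph on these vertices), $V(n)=|B(n)|$, and $\phi(t)=\min\{n\ge0: V(n)>t\}$. For a subgraph $G'=(V',E')$, $|G'|$ is its number of vertices, $d_{G'}(x)$ its degrees, and on $\ell^2(V')$: $(D(G')\varphi)(x)=d_{G'}(x)\varphi(x)$, $(A(G')\varphi)(x)=\sum_{y\in V',y\sim_{G'}x}\varphi(y)$, $\Delta^A(G')=k\,\mathrm{Id}-A(G')$, $\Delta^D(G')=2k\,\mathrm{Id}-D(G')-A(G')$, $\Delta^N(G')=D(G')-A(G')$. For finite $G'$, $\lambda^{\#}(G')$ is the lowest non-zero eigenvalue of $\Delta^{\#}(G')$. *)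

theory Defs
  imports Complex_Main "HOL-Algebra.Algebra"
begin

definition cay_edge :: "('a, 'b) monoid_scheme \<Rightarrow> 'a set \<Rightarrow> 'a \<Rightarrow> 'a \<Rightarrow> bool" where
  "cay_edge G S x y \<longleftrightarrow> x \<in> carrier G \<and> y \<in> carrier G \<and> (\<exists>s\<in>S. y = x \<otimes>\<^bsub>G\<^esub> s)"

definition word_prod :: "('a, 'b) monoid_scheme \<Rightarrow> 'a list \<Rightarrow> 'a" where
  "word_prod G ws = foldr (\<lambda>s x. s \<otimes>\<^bsub>G\<^esub> x) ws \<one>\<^bsub>G\<^esub>"

definition cay_ball :: "('a, 'b) monoid_scheme \<Rightarrow> 'a set \<Rightarrow> nat \<Rightarrow> 'a set" where
  "cay_ball G S n = {word_prod G ws | ws. set ws \<subseteq> S \<and> length ws \<le> n}"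

definition induced_edges :: "('a, 'b) monoid_scheme \<Rightarrow> 'a set \<Rightarrow> 'a set \<Rightarrow> ('a \<times> 'a) set" where
  "induced_edges G S W = {(x, y). x \<in> W \<and> y \<in> W \<and> cay_edge G S x y}"

definition ball_vol :: "('a, 'b) monoid_scheme \<Rightarrow> 'a set \<Rightarrow> nat \<Rightarrow> nat" where
  "ball_vol G S n = card (cay_ball G S n)"

definition growth_inv :: "('a, 'b) monoid_scheme \<Rightarrow> 'a set \<Rightarrow> real \<Rightarrow> nat" where
  "growth_inv G S t = (LEAST n. real (ball_vol G S n) > t)"

definition is_subgraph :: "('a, 'b) monoid_scheme \<Rightarrow> 'a set \<Rightarrow> 'a set \<Rightarrow> ('a \<times> 'a) set \<Rightarrow> bool" where
  "is_subgraph G S V' E' \<longleftrightarrow> V' \<subseteq> carrier G \<and> E' \<subseteq> V' \<times> V' \<and>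
     (\<forall>(x, y) \<in> E'. cay_edge G S x y) \<and> (\<forall>(x, y) \<in> E'. (y, x) \<in> E')"

definition graph_connected :: "'a set \<Rightarrow> ('a \<times> 'a) set \<Rightarrow> bool" where
  "graph_connected V' E' \<longleftrightarrow> V' \<noteq> {} \<and> (\<forall>x\<in>V'. \<forall>y\<in>V'. (x, y) \<in> E'\<^sup>*)"

definition is_path_graph :: "'a set \<Rightarrow> ('a \<times> 'a) set \<Rightarrow> nat \<Rightarrow> bool" where
  "is_path_graph V' E' n \<longleftrightarrow> (\<exists>xs. distinct xs \<and> length xs = n \<and> V' = set xs \<and>
     E' = {(xs ! i, xs ! Suc i) | i. Suc i < n} \<union> {(xs ! Suc i, xs ! i) | i. Suc i < n})"

definition gdeg :: "('a \<times> 'a) set \<Rightarrow> 'a \<Rightarrow> nat" where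
  "gdeg E' x = card {y. (x, y) \<in> E'}"

definition adj_op :: "'a set \<Rightarrow> ('a \<times> 'a) set \<Rightarrow> ('a \<Rightarrow> real) \<Rightarrow> 'a \<Rightarrow> real" where
  "adj_op V' E' f x = (\<Sum>y \<in> {y \<in> V'. (x, y) \<in> E'}. f y)"

definition lap_A :: "nat \<Rightarrow> 'a set \<Rightarrow> ('a \<times> 'a) set \<Rightarrow> ('a \<Rightarrow> real) \<Rightarrow> 'a \<Rightarrow> real" where
  "lap_A k V' E' f x = real k * f x - adj_op V' E' f x"

definition lap_D :: "nat \<Rightarrow> 'a set \<Rightarrow> ('a \<times> 'a) set \<Rightarrow> ('a \<Rightarrow> real) \<Rightarrow> 'a \<Rightarrow> real" where
  "lap_D k V' E' f x = 2 * real k * f x - real (gdeg E' x) * f x - adj_op V' E' f x"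

definition lap_N :: "'a set \<Rightarrow> ('a \<times> 'a) set \<Rightarrow> ('a \<Rightarrow> real) \<Rightarrow> 'a \<Rightarrow> real" where
  "lap_N V' E' f x = real (gdeg E' x) * f x - adj_op V' E' f x"

definition is_eigenvalue :: "'a set \<Rightarrow> (('a \<Rightarrow> real) \<Rightarrow> 'a \<Rightarrow> real) \<Rightarrow> real \<Rightarrow> bool" where
  "is_eigenvalue V' L \<mu> \<longleftrightarrow> (\<exists>f. (\<exists>x\<in>V'. f x \<noteq> 0) \<and> (\<forall>x\<in>V'. L f x = \<mu> * f x))"

definition lowest_nz_eig :: "'a set \<Rightarrow> (('a \<Rightarrow> real) \<Rightarrow> 'a \<Rightarrow> real) \<Rightarrow> real" where
  "lowest_nz_eig V' L = Min {\<mu>. is_eigenvalue V' L \<mu> \<and> \<mu> \<noteq> 0}"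

end

theory Submission
  imports Defs "HOL-Analysis.Analysis" "HOL-Library.Transitive_Closure_Table"
begin

definition ip :: "'a set \<Rightarrow> ('a \<Rightarrow> real) \<Rightarrow> ('a \<Rightarrow> real) \<Rightarrow> real" where
  "ip V f g = (\<Sum>x\<in>V. f x * g x)"

definition lapw :: "('a \<Rightarrow> real) \<Rightarrow> 'a set \<Rightarrow> ('a \<times> 'a) set \<Rightarrow> ('a \<Rightarrow> real) \<Rightarrow> 'a \<Rightarrow> real" where
  "lapw w V E f x = w x * f x - adj_op V E f x"

definition symrel :: "('a \<times> 'a) set \<Rightarrow> bool" where
  "symrel E \<longleftrightarrow> (\<forall>(x, y) \<in> E. (y, x) \<in> E)"

lemma lap_A_lapw: "lap_A k V E = lapw (\<lambda>_. real k) V E"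
  by (intro ext) (simp add: lap_A_def lapw_def)

lemma lap_D_lapw: "lap_D k V E = lapw (\<lambda>x. 2 * real k - real (gdeg E x)) V E"
  by (intro ext) (simp add: lap_D_def lapw_def algebra_simps)

lemma lap_N_lapw: "lap_N V E = lapw (\<lambda>x. real (gdeg E x)) V E"
  by (intro ext) (simp add: lap_N_def lapw_def)

lemma adj_sum:
  assumes "finite V" "E \<subseteq> V \<times> V"
  shows "ip V g (adj_op V E f) = (\<Sum>p\<in>E. g (fst p) * f (snd p))"
proof -
  have E: "E = Sigma V (\<lambda>x. {y\<in>V. (x, y) \<in> E})" using assms(2) by auto
  have "ip V g (adj_op V E f) = (\<Sum>x\<in>V. \<Sum>y\<in>{y\<in>V. (x, y) \<in> E}. g x * f y)"
    by (simp add: ip_def adj_op_def sum_distrib_left)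
  also have "\<dots> = (\<Sum>p\<in>Sigma V (\<lambda>x. {y\<in>V. (x, y) \<in> E}). g (fst p) * f (snd p))"
    by (subst sum.Sigma) (use assms(1) in \<open>auto simp: case_prod_beta\<close>)
  finally show ?thesis using E by simp
qed

lemma sum_swap_sym:
  assumes "symrel E"
  shows "(\<Sum>p\<in>E. h (fst p) (snd p)) = (\<Sum>p\<in>E. h (snd p) (fst p))"
proof (rule sum.reindex_bij_witness[of _ prod.swap prod.swap])
qed (use assms in \<open>auto simp: symrel_def\<close>)

lemma adj_symm:
  assumes "finite V" "E \<subseteq> V \<times> V" "symrel E"
  shows "ip V g (adj_op V E f) = ip V f (adj_op V E g)"
  using adj_sum[OF assms(1,2), of g f] adj_sum[OF assms(1,2), of f g]
    sum_swap_sym[OF assms(3), of "\<lambda>a b. g a * f b"] by (simp add: mult.commute)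

lemma lapw_symm:
  assumes "finite V" "E \<subseteq> V \<times> V" "symrel E"
  shows "ip V g (lapw w V E f) = ip V f (lapw w V E g)"
proof -
  have "ip V g (lapw w V E f) = (\<Sum>x\<in>V. w x * f x * g x) - ip V g (adj_op V E f)"
    by (simp add: ip_def lapw_def algebra_simps sum_subtractf)
  moreover have "ip V f (lapw w V E g) = (\<Sum>x\<in>V. w x * f x * g x) - ip V f (adj_op V E g)"
    by (simp add: ip_def lapw_def algebra_simps sum_subtractf)
  ultimately show ?thesis using adj_symm[OF assms] by simp
qed

lemma adj_lin: "adj_op V E (\<lambda>y. a * f y + b * g y) x = a * adj_op V E f x + b * adj_op V E g x"
  by (simp add: adj_op_def sum.distrib sum_distrib_left)

lemma lapw_lin: "lapw w V E (\<lambda>y. a * f y + b * g y) x = a * lapw w V E f x + b * lapw w V E g x"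
  by (simp add: lapw_def adj_lin algebra_simps)

lemma adj_cong: "(\<And>y. y \<in> V \<Longrightarrow> f y = f' y) \<Longrightarrow> adj_op V E f x = adj_op V E f' x"
  unfolding adj_op_def by (rule sum.cong) auto

lemma lapw_cong: "(\<And>y. y \<in> V \<Longrightarrow> f y = f' y) \<Longrightarrow> x \<in> V \<Longrightarrow> lapw w V E f x = lapw w V E f' x"
  unfolding lapw_def using adj_cong[of V f f' E x] by simp

lemma eig_orth:
  assumes "finite V" "E \<subseteq> V \<times> V" "symrel E"
    and f: "\<forall>x\<in>V. lapw w V E f x = \<mu> * f x" and g: "\<forall>x\<in>V. lapw w V E g x = \<nu> * g x"
    and "\<mu> \<noteq> \<nu>"
  shows "ip V f g = 0"
proof -
  have "ip V g (lapw w V E f) = \<mu> * ip V f g"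
    using f by (simp add: ip_def sum_distrib_left algebra_simps)
  moreover have "ip V f (lapw w V E g) = \<nu> * ip V f g"
    using g by (simp add: ip_def sum_distrib_left algebra_simps)
  ultimately have "\<mu> * ip V f g = \<nu> * ip V f g" using lapw_symm[OF assms(1-3), of g w f] by argo
  then have "(\<mu> - \<nu>) * ip V f g = 0" by (simp add: algebra_simps)
  then show ?thesis using assms(6) by simp
qed

lemma lapw_scale: "lapw w V E (\<lambda>y. a * f y) x = a * lapw w V E f x"
  by (simp add: lapw_def adj_op_def sum_distrib_left algebra_simps)

lemma ip_scale: "ip V (\<lambda>y. a * f y) (\<lambda>y. a * g y) = a^2 * ip V f g"
  unfolding ip_def by (simp add: sum_distrib_left power2_eq_square mult.assoc mult.left_commute)

lemma eig_card_bound: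
  assumes V: "finite V" and EV: "E \<subseteq> V \<times> V" and sy: "symrel E"
    and M: "finite M" "M \<subseteq> {\<mu>. is_eigenvalue V (lapw w V E) \<mu>}"
  shows "card M \<le> card V"
proof -
  have "\<forall>\<mu>\<in>M. \<exists>u. (\<exists>x\<in>V. u x \<noteq> 0) \<and> (\<forall>x\<in>V. lapw w V E u x = \<mu> * u x)"
    using M(2) unfolding is_eigenvalue_def by blast
  from bchoice[OF this] obtain u where u0: "\<forall>\<mu>\<in>M. (\<exists>x\<in>V. u \<mu> x \<noteq> 0) \<and> (\<forall>x\<in>V. lapw w V E (u \<mu>) x = \<mu> * u \<mu> x)"
    by blast
  have u: "(\<exists>x\<in>V. u \<mu> x \<noteq> 0) \<and> (\<forall>x\<in>V. lapw w V E (u \<mu>) x = \<mu> * u \<mu> x)" if "\<mu> \<in> M" for \<mu>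
    using u0 that by blast
  define v where "v \<mu> = (\<lambda>y. (1 / sqrt (ip V (u \<mu>) (u \<mu>))) * u \<mu> y)" for \<mu>
  have pos: "ip V (u \<mu>) (u \<mu>) > 0" if mu: "\<mu> \<in> M" for \<mu>
  proof -
    obtain x where x: "x \<in> V" "u \<mu> x \<noteq> 0" using u[OF mu] by blast
    have "0 < u \<mu> x * u \<mu> x" using x(2) not_real_square_gt_zero by blast
    also have "\<dots> \<le> ip V (u \<mu>) (u \<mu>)" unfolding ip_def
      by (rule member_le_sum) (use x V in auto)
    finally show ?thesis .
  qed
  have veig: "\<forall>x\<in>V. lapw w V E (v \<mu>) x = \<mu> * v \<mu> x" if "\<mu> \<in> M" for \<mu>
    using u[OF that] unfolding v_def lapw_scale by simp
  have vnorm: "ip V (v \<mu>) (v \<mu>) = 1" if "\<mu> \<in> M" for \<mu>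
  proof -
    have "ip V (v \<mu>) (v \<mu>) = (1 / sqrt (ip V (u \<mu>) (u \<mu>)))^2 * ip V (u \<mu>) (u \<mu>)"
      unfolding v_def by (rule ip_scale)
    also have "\<dots> = 1"
    proof -
      let ?a = "ip V (u \<mu>) (u \<mu>)"
      have "(sqrt ?a)^2 = ?a" using pos[OF that] by simp
      then show ?thesis using pos[OF that] by (simp add: power_divide)
    qed
    finally show ?thesis .
  qed
  have vorth: "ip V (v \<mu>) (v \<nu>) = 0" if "\<mu> \<in> M" "\<nu> \<in> M" "\<mu> \<noteq> \<nu>" for \<mu> \<nu>
    by (rule eig_orth[OF V EV sy veig[OF that(1)] veig[OF that(2)] that(3)])
  have vip: "ip V (v \<mu>) (v \<nu>) = (if \<mu> = \<nu> then 1 else 0)" if "\<mu> \<in> M" "\<nu> \<in> M" for \<mu> \<nu>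
    using vnorm vorth that by auto
  have bessel: "(\<Sum>\<mu>\<in>M. (v \<mu> x)^2) \<le> 1" if x: "x \<in> V" for x
  proof -
    define c where "c \<mu> = v \<mu> x" for \<mu>
    define h where "h z = (\<Sum>\<mu>\<in>M. c \<mu> * v \<mu> z)" for z
    have hx: "h x = (\<Sum>\<mu>\<in>M. (c \<mu>)^2)" by (simp add: h_def c_def power2_eq_square)
    have hv: "ip V h (v \<nu>) = c \<nu>" if "\<nu> \<in> M" for \<nu>
    proof -
      have "ip V h (v \<nu>) = (\<Sum>z\<in>V. \<Sum>\<mu>\<in>M. c \<mu> * (v \<mu> z * v \<nu> z))"
        unfolding ip_def h_def by (simp add: sum_distrib_right mult.assoc)
      also have "\<dots> = (\<Sum>\<mu>\<in>M. \<Sum>z\<in>V. c \<mu> * (v \<mu> z * v \<nu> z))"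
        by (rule sum.swap)
      also have "\<dots> = (\<Sum>\<mu>\<in>M. c \<mu> * ip V (v \<mu>) (v \<nu>))"
        unfolding ip_def by (simp add: sum_distrib_left)
      also have "\<dots> = (\<Sum>\<mu>\<in>M. if \<mu> = \<nu> then c \<mu> else 0)"
        by (rule sum.cong) (use vip that in auto)
      also have "\<dots> = c \<nu>" using M(1) that by simp
      finally show ?thesis .
    qed
    have hh: "ip V h h = (\<Sum>\<mu>\<in>M. (c \<mu>)^2)"
    proof -
      have "ip V h h = (\<Sum>z\<in>V. \<Sum>\<nu>\<in>M. c \<nu> * (h z * v \<nu> z))"
        unfolding ip_def by (subst (2) h_def) (simp add: sum_distrib_left algebra_simps)
      also have "\<dots> = (\<Sum>\<nu>\<in>M. \<Sum>z\<in>V. c \<nu> * (h z * v \<nu> z))"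
        by (rule sum.swap)
      also have "\<dots> = (\<Sum>\<nu>\<in>M. c \<nu> * ip V h (v \<nu>))"
        unfolding ip_def by (simp add: sum_distrib_left)
      also have "\<dots> = (\<Sum>\<nu>\<in>M. (c \<nu>)^2)"
        by (rule sum.cong) (use hv in \<open>auto simp: power2_eq_square\<close>)
      finally show ?thesis .
    qed
    have "(h x)^2 \<le> ip V h h" unfolding ip_def power2_eq_square
      by (rule member_le_sum) (use x V in auto)
    then have "(\<Sum>\<mu>\<in>M. (c \<mu>)^2)^2 \<le> (\<Sum>\<mu>\<in>M. (c \<mu>)^2)" using hx hh by simp
    moreover have "(\<Sum>\<mu>\<in>M. (c \<mu>)^2) \<ge> 0" by (simp add: sum_nonneg)
    ultimately have "(\<Sum>\<mu>\<in>M. (c \<mu>)^2) \<le> 1"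
    proof -
      fix S :: real assume "S^2 \<le> S" "0 \<le> S"
      then have "S * S \<le> S * 1" by (simp add: power2_eq_square)
      then show "S \<le> 1" using \<open>0 \<le> S\<close>
        by (cases "S = 0") (simp_all add: mult_le_cancel_left_pos)
    qed
    then show ?thesis by (simp add: c_def)
  qed
  have "real (card M) = (\<Sum>\<mu>\<in>M. ip V (v \<mu>) (v \<mu>))"
    by (simp add: vnorm cong: sum.cong)
  also have "\<dots> = (\<Sum>\<mu>\<in>M. \<Sum>x\<in>V. (v \<mu> x)^2)"
    unfolding ip_def by (simp add: power2_eq_square)
  also have "\<dots> = (\<Sum>x\<in>V. \<Sum>\<mu>\<in>M. (v \<mu> x)^2)"
    by (rule sum.swap)
  also have "\<dots> \<le> (\<Sum>x\<in>V. 1)" by (rule sum_mono) (use bessel in auto)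
  also have "\<dots> = real (card V)" by simp
  finally show ?thesis by simp
qed

lemma eig_finite:
  assumes V: "finite V" and EV: "E \<subseteq> V \<times> V" and sy: "symrel E"
  shows "finite {\<mu>. is_eigenvalue V (lapw w V E) \<mu>}"
proof (rule ccontr)
  assume "infinite {\<mu>. is_eigenvalue V (lapw w V E) \<mu>}"
  then obtain M where "M \<subseteq> {\<mu>. is_eigenvalue V (lapw w V E) \<mu>}" "finite M" "card M = Suc (card V)"
    using infinite_arbitrarily_large by blast
  then show False using eig_card_bound[OF V EV sy, of M w] by simp
qed

lemma compact_box_fun:
  fixes V :: "'a set"
  shows "compact (Pi UNIV (\<lambda>x. if x \<in> V then {-1..1::real} else {0}))"
proof -
  have "compactin (product_topology (\<lambda>_. euclidean) UNIV) (PiE UNIV (\<lambda>x. if x \<in> V then {-1..1::real} else {0}))"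
    by (subst compactin_PiE) (auto simp: compactin_euclidean_iff)
  then show ?thesis by (simp add: euclidean_product_topology compactin_euclidean_iff PiE_UNIV_domain)
qed

lemma min_exists:
  fixes V :: "'a set" and c :: "'a \<Rightarrow> real" and \<Phi> :: "('a \<Rightarrow> real) \<Rightarrow> real"
  assumes "finite V" "continuous_on UNIV \<Phi>"
   and ne: "K \<noteq> {}"
   and K: "K = {g. (\<forall>x. x \<notin> V \<longrightarrow> g x = 0) \<and> (\<Sum>x\<in>V. (g x)^2) = 1 \<and> (\<Sum>x\<in>V. c x * g x) = 0}"
  shows "\<exists>g\<in>K. \<forall>h\<in>K. \<Phi> g \<le> \<Phi> h"
proof -
  have sub: "K \<subseteq> Pi UNIV (\<lambda>x. if x \<in> V then {-1..1::real} else {0})"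
  proof
    fix g assume "g \<in> K"
    hence g0: "\<forall>x. x \<notin> V \<longrightarrow> g x = 0" and s: "(\<Sum>x\<in>V. (g x)^2) = 1" using K by auto
    have "\<bar>g x\<bar> \<le> 1" if "x \<in> V" for x
    proof -
      have "(g x)^2 \<le> (\<Sum>x\<in>V. (g x)^2)"
        using member_le_sum[of x V "\<lambda>x. (g x)^2"] that assms(1) by auto
      then have "(g x)^2 \<le> 1^2" using s by simp
      then show ?thesis by (metis abs_le_square_iff abs_one)
    qed
    then show "g \<in> Pi UNIV (\<lambda>x. if x \<in> V then {-1..1::real} else {0})"
      using g0 by (auto simp: abs_le_iff)
  qed
  have cl: "closed K"
  proof -
    have "K = (\<Inter>x\<in>-V. {g. g x = 0}) \<inter> {g. (\<Sum>x\<in>V. (g x)^2) = 1} \<inter> {g. (\<Sum>x\<in>V. c x * g x) = 0}"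
      using K by blast
    moreover have "closed {g::'a\<Rightarrow>real. g x = 0}" for x
      by (rule closed_Collect_eq) (simp_all add: continuous_on_const)
    moreover have "closed {g::'a\<Rightarrow>real. (\<Sum>x\<in>V. (g x)^2) = 1}"
      by (intro closed_Collect_eq continuous_on_sum continuous_on_mult continuous_on_power continuous_on_const continuous_on_product_coordinates)
    moreover have "closed {g::'a\<Rightarrow>real. (\<Sum>x\<in>V. c x * g x) = 0}"
      by (intro closed_Collect_eq continuous_on_sum continuous_on_mult continuous_on_power continuous_on_const continuous_on_product_coordinates)
    ultimately show ?thesis by (simp only:) (intro closed_Int closed_INT ballI; assumption)
  qed
  have "compact (Pi UNIV (\<lambda>x. if x \<in> V then {-1..1::real} else {0}) \<inter> K)"
    by (rule compact_Int_closed[OF compact_box_fun cl])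
  then have "compact K" using sub by (simp add: Int_absorb1)
  show ?thesis
    by (rule continuous_attains_inf[OF \<open>compact K\<close> ne continuous_on_subset[OF assms(2) subset_UNIV]])
qed

definition qf :: "('a \<Rightarrow> real) \<Rightarrow> 'a set \<Rightarrow> ('a \<times> 'a) set \<Rightarrow> ('a \<Rightarrow> real) \<Rightarrow> real" where
  "qf w V E f = ip V f (lapw w V E f)"

lemma qf_cont: "continuous_on UNIV (\<lambda>g. qf w V E g)"
  unfolding qf_def ip_def lapw_def adj_op_def
  by (intro continuous_on_sum continuous_on_mult continuous_on_diff continuous_on_const continuous_on_product_coordinates)

lemma qf_scale: "qf w V E (\<lambda>y. a * f y) = a^2 * qf w V E f"
  unfolding qf_def lapw_scale by (simp add: ip_def sum_distrib_left power2_eq_square algebra_simps)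

lemma qf_cong: "(\<And>y. y \<in> V \<Longrightarrow> f y = f' y) \<Longrightarrow> qf w V E f = qf w V E f'"
  unfolding qf_def ip_def by (rule sum.cong) (simp_all add: lapw_cong[of V f f'])

lemma ip_cong: "(\<And>y. y \<in> V \<Longrightarrow> f y = f' y) \<Longrightarrow> (\<And>y. y \<in> V \<Longrightarrow> g y = g' y) \<Longrightarrow> ip V f g = ip V f' g'"
  unfolding ip_def by (rule sum.cong) simp_all

lemma ip_lin2: "ip V f (\<lambda>y. a * g y + b * h y) = a * ip V f g + b * ip V f h"
  unfolding ip_def by (simp add: sum.distrib sum_distrib_left algebra_simps)

lemma ip_comm: "ip V f g = ip V g f"
  unfolding ip_def by (simp add: mult.commute)

lemma ip_self_nonneg: "ip V f f \<ge> 0"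
  unfolding ip_def by (rule sum_nonneg) simp

lemma ip_self_zero:
  assumes "finite V" "ip V f f = 0" "x \<in> V" shows "f x = 0"
proof -
  have "\<forall>x\<in>V. f x * f x = 0"
    using assms(2) sum_nonneg_eq_0_iff[OF assms(1), of "\<lambda>x. f x * f x"] unfolding ip_def by simp
  then show ?thesis using assms(3) by simp
qed

lemma quad_nonneg_imp:
  fixes a b :: real
  assumes "\<And>t. 2 * t * b + t^2 * a \<ge> 0"
  shows "b = 0"
proof (rule ccontr)
  assume nb: "b \<noteq> 0"
  define D where "D = \<bar>a\<bar> + 1"
  define t where "t = - b / D"
  have d: "D > 0" unfolding D_def by simp
  have "2 * t * b + t^2 * a = b^2 * (a - 2 * D) / D^2"
    unfolding t_def using d by (simp add: field_simps power2_eq_square)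
  moreover have "a - 2 * D < 0"
    unfolding D_def using abs_ge_self[of a] abs_ge_zero[of a] by (smt (verit))
  then have "b^2 * (a - 2 * D) < 0"
    using nb by (intro mult_pos_neg) auto
  ultimately have "2 * t * b + t^2 * a < 0" using d by (simp add: divide_neg_pos)
  with assms[of t] show False by simp
qed

lemma min_eig_core:
  fixes V :: "'a set" and c :: "'a \<Rightarrow> real"
  assumes V: "finite V" and EV: "E \<subseteq> V \<times> V" and sy: "symrel E"
   and ne: "\<exists>g. (\<forall>x. x \<notin> V \<longrightarrow> g x = 0) \<and> ip V g g = 1 \<and> ip V c g = 0"
  shows "\<exists>g. (\<forall>x. x \<notin> V \<longrightarrow> g x = 0) \<and> ip V g g = 1 \<and> ip V c g = 0 \<and>
    (\<forall>f. ip V c f = 0 \<longrightarrow> qf w V E f \<ge> qf w V E g * ip V f f) \<and>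
    (\<forall>h. ip V c h = 0 \<longrightarrow> ip V h (lapw w V E g) = qf w V E g * ip V g h)"
proof -
  define K where "K = {g. (\<forall>x. x \<notin> V \<longrightarrow> g x = 0) \<and> (\<Sum>x\<in>V. (g x)^2) = 1 \<and> (\<Sum>x\<in>V. c x * g x) = 0}"
  have Kip: "K = {g. (\<forall>x. x \<notin> V \<longrightarrow> g x = 0) \<and> ip V g g = 1 \<and> ip V c g = 0}"
    unfolding K_def ip_def by (simp add: power2_eq_square)
  have "K \<noteq> {}" using ne Kip by auto
  from min_exists[OF V qf_cont this K_def] obtain g where g: "g \<in> K" "\<forall>h\<in>K. qf w V E g \<le> qf w V E h"
    by blast
  let ?lam = "qf w V E g"
  have gK: "\<forall>x. x \<notin> V \<longrightarrow> g x = 0" "ip V g g = 1" "ip V c g = 0" using g(1) Kip by auto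
  have minf: "qf w V E f \<ge> ?lam * ip V f f" if cf: "ip V c f = 0" for f
  proof -
    define f0 where "f0 y = (if y \<in> V then f y else 0)" for y
    have e1: "qf w V E f0 = qf w V E f" by (rule qf_cong) (simp add: f0_def)
    have e2: "ip V f0 f0 = ip V f f" by (rule ip_cong) (simp_all add: f0_def)
    have e3: "ip V c f0 = 0" using cf by (subst ip_cong[of V c c f0 f]) (simp_all add: f0_def)
    show ?thesis
    proof (cases "ip V f f = 0")
      case True
      have "qf w V E f = 0" unfolding qf_def ip_def
        by (rule sum.neutral) (use ip_self_zero[OF V True] in simp)
      then show ?thesis using True by simp
    next
      case False
      then have pos: "ip V f f > 0" using ip_self_nonneg[of V f] by simp
      define a where "a = 1 / sqrt (ip V f f)"
      have a2: "a^2 * ip V f f = 1" unfolding a_def using pos by (simp add: power_divide)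
      define f1 where "f1 y = a * f0 y" for y
      have "f1 \<in> K" unfolding Kip
      proof (intro CollectI conjI allI impI)
        show "ip V f1 f1 = 1" unfolding f1_def using ip_scale[of V a f0 f0] e2 a2 by simp
        show "ip V c f1 = 0" unfolding f1_def ip_def using e3 unfolding ip_def
          by (simp add: sum_distrib_left[symmetric] mult.left_commute)
      qed (simp add: f1_def f0_def)
      then have "?lam \<le> qf w V E f1" using g(2) by blast
      also have "\<dots> = a^2 * qf w V E f" unfolding f1_def qf_scale e1 ..
      finally have "?lam * ip V f f \<le> a^2 * qf w V E f * ip V f f"
        using pos by (simp add: mult_right_mono)
      also have "\<dots> = qf w V E f" using a2 by (simp add: algebra_simps)
      finally show ?thesis .
    qed
  qed
  have stat: "ip V h (lapw w V E g) = ?lam * ip V g h" if ch: "ip V c h = 0" for h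
  proof -
    let ?b = "ip V h (lapw w V E g) - ?lam * ip V g h"
    let ?a = "qf w V E h - ?lam * ip V h h"
    have "2 * t * ?b + t^2 * ?a \<ge> 0" for t
    proof -
      define ft where "ft = (\<lambda>y. 1 * g y + t * h y)"
      have cft: "ip V c ft = 0" unfolding ft_def ip_lin2 using gK ch by simp
      have symm: "ip V g (lapw w V E h) = ip V h (lapw w V E g)" by (rule lapw_symm[OF V EV sy])
      have L: "lapw w V E ft = (\<lambda>x. lapw w V E g x + t * lapw w V E h x)"
        by (rule ext) (simp add: ft_def lapw_def adj_op_def sum.distrib sum_distrib_left algebra_simps)
      have q0: "qf w V E ft = ip V g (lapw w V E g) + t * ip V g (lapw w V E h) + t * ip V h (lapw w V E g) + t^2 * ip V h (lapw w V E h)"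
        unfolding qf_def L unfolding ip_def ft_def
        by (simp add: sum.distrib sum_distrib_left algebra_simps power2_eq_square)
      have q: "qf w V E ft = ?lam + 2 * t * ip V h (lapw w V E g) + t^2 * qf w V E h"
        using q0 symm unfolding qf_def by simp
      have n: "ip V ft ft = 1 + 2 * t * ip V g h + t^2 * ip V h h"
        using gK(2) unfolding ft_def ip_def
        by (simp add: sum.distrib sum_distrib_left algebra_simps power2_eq_square)
      have "qf w V E ft \<ge> ?lam * ip V ft ft" by (rule minf[OF cft])
      then show ?thesis unfolding q n by (simp add: algebra_simps)
    qed
    then have "?b = 0" by (rule quad_nonneg_imp)
    then show ?thesis by simp
  qed
  show ?thesis using gK minf stat by blast
qed

definition delta :: "'a \<Rightarrow> 'a \<Rightarrow> real" where
  "delta x = (\<lambda>y. if y = x then 1 else 0)"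

lemma ip_delta: "finite V \<Longrightarrow> x \<in> V \<Longrightarrow> ip V (delta x) f = f x"
proof -
  assume V: "finite V" and x: "x \<in> V"
  have "ip V (delta x) f = (\<Sum>y\<in>V. if y = x then f y else 0)"
    unfolding ip_def delta_def by (rule sum.cong) auto
  then show ?thesis using V x by simp
qed

lemma ip_delta2: "finite V \<Longrightarrow> x \<in> V \<Longrightarrow> ip V f (delta x) = f x"
  using ip_delta[of V x f] ip_comm[of V f "delta x"] by simp

lemma min_eig_unconstr:
  assumes V: "finite V" and Vne: "V \<noteq> {}" and EV: "E \<subseteq> V \<times> V" and sy: "symrel E"
  obtains lam where "is_eigenvalue V (lapw w V E) lam" "\<And>f. qf w V E f \<ge> lam * ip V f f"
proof -
  obtain x0 where x0: "x0 \<in> V" using Vne by blast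
  have ne: "\<exists>g. (\<forall>x. x \<notin> V \<longrightarrow> g x = 0) \<and> ip V g g = 1 \<and> ip V (\<lambda>_. 0) g = 0"
  proof (rule exI[of _ "delta x0"], intro conjI allI impI)
    show "ip V (delta x0) (delta x0) = 1" using x0 V by (simp add: ip_delta) (simp add: delta_def)
  qed (use x0 in \<open>auto simp: delta_def ip_def\<close>)
  obtain g where g: "\<forall>x. x \<notin> V \<longrightarrow> g x = 0" "ip V g g = 1" "ip V (\<lambda>_. 0) g = 0"
    "\<forall>f. ip V (\<lambda>_. 0) f = 0 \<longrightarrow> qf w V E f \<ge> qf w V E g * ip V f f"
    "\<forall>h. ip V (\<lambda>_. 0) h = 0 \<longrightarrow> ip V h (lapw w V E g) = qf w V E g * ip V g h"
    using min_eig_core[OF V EV sy ne, where w=w] by (elim exE conjE)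
  have z: "ip V (\<lambda>_. 0) f = 0" for f by (simp add: ip_def)
  have eig: "is_eigenvalue V (lapw w V E) (qf w V E g)"
    unfolding is_eigenvalue_def
  proof (intro exI conjI)
    show "\<exists>x\<in>V. g x \<noteq> 0"
    proof (rule ccontr)
      assume "\<not> (\<exists>x\<in>V. g x \<noteq> 0)"
      then have "ip V g g = 0" unfolding ip_def by (simp add: sum.neutral)
      then show False using g(2) by simp
    qed
    show "\<forall>x\<in>V. lapw w V E g x = qf w V E g * g x"
    proof
      fix x assume x: "x \<in> V"
      have "ip V (delta x) (lapw w V E g) = qf w V E g * ip V g (delta x)" by (rule g(5)[rule_format, OF z])
      then show "lapw w V E g x = qf w V E g * g x" using x V by (simp add: ip_delta ip_delta2)
    qed
  qed
  show ?thesis by (rule that[OF eig]) (rule g(4)[rule_format, OF z])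
qed

lemma min_eig_sum0:
  assumes V: "finite V" and x01: "x0 \<in> V" "x1 \<in> V" "x0 \<noteq> x1" and EV: "E \<subseteq> V \<times> V" and sy: "symrel E"
    and L1: "\<forall>x\<in>V. lapw w V E (\<lambda>_. 1) x = 0"
  obtains lam g where "is_eigenvalue V (lapw w V E) lam" "ip V g g = 1" "ip V (\<lambda>_. 1) g = 0" "qf w V E g = lam"
    "\<And>f. ip V (\<lambda>_. 1) f = 0 \<Longrightarrow> qf w V E f \<ge> lam * ip V f f"
proof -
  define g0 where "g0 = (\<lambda>y. (1 / sqrt 2) * (delta x0 y - delta x1 y))"
  have ne: "\<exists>g. (\<forall>x. x \<notin> V \<longrightarrow> g x = 0) \<and> ip V g g = 1 \<and> ip V (\<lambda>_. 1) g = 0"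
  proof (rule exI[of _ g0], intro conjI allI impI)
    show "g0 x = 0" if "x \<notin> V" for x using that x01 by (auto simp: g0_def delta_def)
    have "ip V (\<lambda>y. delta x0 y - delta x1 y) (\<lambda>y. delta x0 y - delta x1 y) = 2"
    proof -
      have "ip V (\<lambda>y. delta x0 y - delta x1 y) (\<lambda>y. delta x0 y - delta x1 y)
          = ip V (delta x0) (delta x0) - 2 * ip V (delta x0) (delta x1) + ip V (delta x1) (delta x1)"
        unfolding ip_def by (simp add: algebra_simps sum.distrib sum_subtractf sum_distrib_left)
      also have "\<dots> = 2" using V x01 by (simp add: ip_delta) (simp add: delta_def)
      finally show ?thesis .
    qed
    then show "ip V g0 g0 = 1" unfolding g0_def ip_scale by (simp add: power_divide)
    have "ip V (\<lambda>_. 1) (\<lambda>y. delta x0 y - delta x1 y) = 0"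
      unfolding ip_def using V x01 by (simp add: sum_subtractf delta_def)
    then show "ip V (\<lambda>_. 1) g0 = 0" unfolding g0_def ip_def by (simp add: sum_divide_distrib[symmetric])
  qed
  obtain g where g: "\<forall>x. x \<notin> V \<longrightarrow> g x = 0" "ip V g g = 1" "ip V (\<lambda>_. 1) g = 0"
    "\<forall>f. ip V (\<lambda>_. 1) f = 0 \<longrightarrow> qf w V E f \<ge> qf w V E g * ip V f f"
    "\<forall>h. ip V (\<lambda>_. 1) h = 0 \<longrightarrow> ip V h (lapw w V E g) = qf w V E g * ip V g h"
    using min_eig_core[OF V EV sy ne, where w=w] by (elim exE conjE)
  let ?lam = "qf w V E g"
  define r where "r x = lapw w V E g x - ?lam * g x" for x
  have rc: "r x = r x0" if x: "x \<in> V" for x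
  proof -
    define h where "h = (\<lambda>y. delta x y - delta x0 y)"
    have "ip V (\<lambda>_. 1) h = 0" unfolding ip_def h_def using V x x01 by (simp add: sum_subtractf delta_def)
    then have "ip V h (lapw w V E g) = ?lam * ip V g h" by (rule g(5)[rule_format])
    moreover have lin: "ip V h F = ip V (delta x) F - ip V (delta x0) F" for F
      unfolding ip_def h_def by (simp add: left_diff_distrib sum_subtractf)
    moreover have "ip V g h = ip V h g" by (rule ip_comm)
    ultimately have "lapw w V E g x - lapw w V E g x0 = ?lam * (g x - g x0)"
      using V x x01 by (simp add: ip_delta)
    then show ?thesis unfolding r_def by (simp add: algebra_simps)
  qed
  have "(\<Sum>x\<in>V. r x) = ip V (\<lambda>_. 1) (lapw w V E g) - ?lam * ip V (\<lambda>_. 1) g"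
    unfolding r_def ip_def by (simp add: sum_subtractf sum_distrib_left)
  also have "ip V (\<lambda>_. 1) (lapw w V E g) = ip V g (lapw w V E (\<lambda>_. 1))" by (rule lapw_symm[OF V EV sy])
  also have "\<dots> = 0" unfolding ip_def using L1 by simp
  finally have "(\<Sum>x\<in>V. r x) = 0" using g(3) by simp
  moreover have "(\<Sum>x\<in>V. r x) = (\<Sum>x\<in>V. r x0)" using rc by simp
  ultimately have "real (card V) * r x0 = 0" by simp
  moreover have "card V > 0" using V x01 card_gt_0_iff by blast
  ultimately have r0: "r x0 = 0" by simp
  have eig: "is_eigenvalue V (lapw w V E) ?lam"
    unfolding is_eigenvalue_def
  proof (intro exI conjI)
    show "\<exists>x\<in>V. g x \<noteq> 0"
    proof (rule ccontr)
      assume "\<not> (\<exists>x\<in>V. g x \<noteq> 0)"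
      then have "ip V g g = 0" unfolding ip_def by (simp add: sum.neutral)
      then show False using g(2) by simp
    qed
    show "\<forall>x\<in>V. lapw w V E g x = ?lam * g x"
      using rc r0 unfolding r_def by simp
  qed
  show ?thesis by (rule that[OF eig g(2,3)]) (simp_all add: g(4)[rule_format])
qed

lemma gdeg_eq: "E \<subseteq> V \<times> V \<Longrightarrow> gdeg E x = card {y\<in>V. (x, y) \<in> E}"
  unfolding gdeg_def by (rule arg_cong[where f=card]) blast

lemma adj_one: "E \<subseteq> V \<times> V \<Longrightarrow> adj_op V E (\<lambda>_. 1) x = real (gdeg E x)"
  unfolding adj_op_def by (simp add: gdeg_eq)

lemma lapN_one: "E \<subseteq> V \<times> V \<Longrightarrow> lapw (\<lambda>x. real (gdeg E x)) V E (\<lambda>_. 1) x = 0"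
  unfolding lapw_def by (simp add: adj_one)

lemma eig_qf: "\<forall>x\<in>V. lapw w V E f x = \<mu> * f x \<Longrightarrow> qf w V E f = \<mu> * ip V f f"
  unfolding qf_def ip_def by (simp add: sum_distrib_left algebra_simps)

lemma qf_formula:
  assumes V: "finite V" and EV: "E \<subseteq> V \<times> V" and sy: "symrel E"
  shows "qf w V E f = (\<Sum>x\<in>V. (w x - real (gdeg E x)) * (f x)^2) + (\<Sum>p\<in>E. (f (fst p) - f (snd p))^2) / 2"
proof -
  have fE: "finite E" using V EV finite_subset by blast
  have S1: "(\<Sum>p\<in>E. (f (fst p))^2) = (\<Sum>x\<in>V. real (gdeg E x) * (f x)^2)"
  proof -
    have "(\<Sum>p\<in>E. (f (fst p))^2) = ip V (\<lambda>x. (f x)^2) (adj_op V E (\<lambda>_. 1))"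
      by (simp add: adj_sum[OF V EV])
    also have "\<dots> = (\<Sum>x\<in>V. real (gdeg E x) * (f x)^2)"
      unfolding ip_def by (simp add: adj_one[OF EV] mult.commute)
    finally show ?thesis .
  qed
  have S2: "(\<Sum>p\<in>E. (f (snd p))^2) = (\<Sum>p\<in>E. (f (fst p))^2)"
    using sum_swap_sym[OF sy, of "\<lambda>a b. (f b)^2"] by simp
  have "(\<Sum>p\<in>E. (f (fst p) - f (snd p))^2) = (\<Sum>p\<in>E. (f (fst p))^2) + (\<Sum>p\<in>E. (f (snd p))^2) - 2 * (\<Sum>p\<in>E. f (fst p) * f (snd p))"
    by (simp add: power2_diff sum.distrib sum_subtractf sum_distrib_left mult.assoc)
  then have D: "(\<Sum>p\<in>E. (f (fst p) - f (snd p))^2) / 2 = (\<Sum>x\<in>V. real (gdeg E x) * (f x)^2) - (\<Sum>p\<in>E. f (fst p) * f (snd p))"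
    using S1 S2 by simp
  have "qf w V E f = (\<Sum>x\<in>V. w x * (f x)^2) - ip V f (adj_op V E f)"
    unfolding qf_def ip_def lapw_def by (simp add: algebra_simps sum_subtractf power2_eq_square)
  also have "ip V f (adj_op V E f) = (\<Sum>p\<in>E. f (fst p) * f (snd p))" by (rule adj_sum[OF V EV])
  finally show ?thesis using D by (simp add: algebra_simps sum_subtractf)
qed

fun pset :: "'a \<Rightarrow> 'a list \<Rightarrow> ('a \<times> 'a) set" where
  "pset x [] = {}"
| "pset x (y # ys) = insert (x, y) (pset y ys)"

lemma pset_fst: "fst ` pset x xs \<subseteq> insert x (set xs)"
  by (induction xs arbitrary: x) auto

lemma pset_finite: "finite (pset x xs)"
  by (induction xs arbitrary: x) auto

lemma pset_card: "card (pset x xs) \<le> length xs"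
proof (induction xs arbitrary: x)
  case (Cons y ys)
  have "card (insert (x, y) (pset y ys)) \<le> Suc (card (pset y ys))"
    by (simp add: card_insert_if pset_finite)
  then show ?case using Cons.IH[of y] by simp
qed simp

lemma path_props:
  assumes "rtrancl_path (\<lambda>a b. (a, b) \<in> E) x xs y"
  shows "pset x xs \<subseteq> E" "E \<subseteq> V \<times> V \<Longrightarrow> set xs \<subseteq> V"
  using assms by (induction rule: rtrancl_path.induct) auto

lemma path_abs:
  fixes f :: "'a \<Rightarrow> real"
  assumes "rtrancl_path (\<lambda>a b. (a, b) \<in> E) x xs y" "distinct (x # xs)"
  shows "\<bar>f x - f y\<bar> \<le> (\<Sum>p\<in>pset x xs. \<bar>f (fst p) - f (snd p)\<bar>)"
  using assms
proof (induction rule: rtrancl_path.induct)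
  case (base x) then show ?case by simp
next
  case (step x y ys z)
  have nin: "(x, y) \<notin> pset y ys"
  proof
    assume "(x, y) \<in> pset y ys"
    then have "x \<in> insert y (set ys)" using pset_fst[of y ys] by force
    then show False using step.prems by auto
  qed
  have "\<bar>f x - f z\<bar> \<le> \<bar>f x - f y\<bar> + \<bar>f y - f z\<bar>" by simp
  also have "\<dots> \<le> \<bar>f x - f y\<bar> + (\<Sum>p\<in>pset y ys. \<bar>f (fst p) - f (snd p)\<bar>)"
    using step.IH step.prems by simp
  also have "\<dots> = (\<Sum>p\<in>pset x (y # ys). \<bar>f (fst p) - f (snd p)\<bar>)"
    using nin by (simp add: pset_finite)
  finally show ?case .
qed

lemma conn_path_bound:
  assumes V: "finite V" and EV: "E \<subseteq> V \<times> V" and conn: "graph_connected V E"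
    and x: "x \<in> V" and y: "y \<in> V"
  shows "(f x - f y)^2 \<le> real (card V) * (\<Sum>p\<in>E. (f (fst p) - f (snd p))^2)"
proof -
  have fE: "finite E" using V EV finite_subset by blast
  have "(x, y) \<in> E\<^sup>*" using conn x y unfolding graph_connected_def by blast
  then have "(\<lambda>a b. (a, b) \<in> E)\<^sup>*\<^sup>* x y" by (simp add: rtranclp_rtrancl_eq)
  then obtain xs0 where "rtrancl_path (\<lambda>a b. (a, b) \<in> E) x xs0 y" by (auto simp: rtranclp_eq_rtrancl_path)
  then obtain xs where p: "rtrancl_path (\<lambda>a b. (a, b) \<in> E) x xs y" and d: "distinct (x # xs)"
    using rtrancl_path_distinct by metis
  let ?P = "pset x xs"
  have PE: "?P \<subseteq> E" by (rule path_props(1)[OF p])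
  have sV: "set (x # xs) \<subseteq> V" using path_props(2)[OF p EV] x by simp
  have "length (x # xs) = card (set (x # xs))" using d by (simp add: distinct_card)
  also have "\<dots> \<le> card V" using sV V by (rule card_mono[rotated])
  finally have len: "length xs < card V" by simp
  have "(f x - f y)^2 = \<bar>f x - f y\<bar>^2" by simp
  also have "\<dots> \<le> (\<Sum>p\<in>?P. \<bar>f (fst p) - f (snd p)\<bar>)^2"
    by (rule power_mono[OF path_abs[OF p d, of f] abs_ge_zero])
  also have "\<dots> = (\<Sum>p\<in>?P. \<bar>f (fst p) - f (snd p)\<bar> * 1)^2" by simp
  also have "\<dots> \<le> (\<Sum>p\<in>?P. \<bar>f (fst p) - f (snd p)\<bar>^2) * (\<Sum>p\<in>?P. 1^2)"
    by (rule Cauchy_Schwarz_ineq_sum)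
  also have "\<dots> = (\<Sum>p\<in>?P. (f (fst p) - f (snd p))^2) * real (card ?P)" by simp
  also have "\<dots> \<le> (\<Sum>p\<in>E. (f (fst p) - f (snd p))^2) * real (card V)"
  proof (rule mult_mono)
    show "(\<Sum>p\<in>?P. (f (fst p) - f (snd p))^2) \<le> (\<Sum>p\<in>E. (f (fst p) - f (snd p))^2)"
      by (rule sum_mono2[OF fE PE]) simp
    show "real (card ?P) \<le> real (card V)" using pset_card[of x xs] len by simp
  qed (auto intro: sum_nonneg)
  finally show ?thesis by (simp add: mult.commute)
qed

lemma poincare:
  assumes V: "finite V" and EV: "E \<subseteq> V \<times> V" and conn: "graph_connected V E"
    and s0: "ip V (\<lambda>_. 1) f = 0"
  shows "ip V f f \<le> (real (card V))^2 * ((\<Sum>p\<in>E. (f (fst p) - f (snd p))^2) / 2)"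
proof -
  let ?n = "real (card V)"
  let ?D = "\<Sum>p\<in>E. (f (fst p) - f (snd p))^2"
  have sf: "(\<Sum>x\<in>V. f x) = 0" using s0 by (simp add: ip_def)
  have "(\<Sum>x\<in>V. \<Sum>y\<in>V. (f x - f y)^2) = (\<Sum>x\<in>V. \<Sum>y\<in>V. (f x)^2 + (f y)^2 - 2 * f x * f y)"
    by (simp add: power2_diff)
  also have "\<dots> = (\<Sum>x\<in>V. ?n * (f x)^2 + (\<Sum>y\<in>V. (f y)^2) - 2 * f x * (\<Sum>y\<in>V. f y))"
    by (simp add: sum.distrib sum_subtractf sum_distrib_left mult.assoc)
  also have "\<dots> = (\<Sum>x\<in>V. ?n * (f x)^2) + (\<Sum>x\<in>V. \<Sum>y\<in>V. (f y)^2) - (\<Sum>x\<in>V. 2 * f x * (\<Sum>y\<in>V. f y))"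
    by (simp add: sum.distrib sum_subtractf)
  also have "\<dots> = ?n * ip V f f + ?n * ip V f f"
    using sf by (simp add: ip_def power2_eq_square sum_distrib_left[symmetric])
  also have "\<dots> = 2 * ?n * ip V f f" by simp
  finally have eq: "(\<Sum>x\<in>V. \<Sum>y\<in>V. (f x - f y)^2) = 2 * ?n * ip V f f" .
  have "(\<Sum>x\<in>V. \<Sum>y\<in>V. (f x - f y)^2) \<le> (\<Sum>x\<in>V. \<Sum>y\<in>V. ?n * ?D)"
    by (intro sum_mono conn_path_bound[OF V EV conn])
  also have "\<dots> = ?n * ?n * (?n * ?D)" by simp
  finally have "2 * ?n * ip V f f \<le> ?n * (?n * ?n * ?D)" using eq by (simp add: algebra_simps)
  then show ?thesis
  proof (cases "card V = 0")
    case True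
    then have "V = {}" using V by simp
    then show ?thesis by (simp add: ip_def)
  next
    case False
    then have "?n > 0" by simp
    with \<open>2 * ?n * ip V f f \<le> ?n * (?n * ?n * ?D)\<close> have "2 * ip V f f \<le> ?n * ?n * ?D"
      by (simp add: mult.assoc)
    then show ?thesis by (simp add: power2_eq_square field_simps)
  qed
qed

lemma N_eig_lower:
  assumes V: "finite V" and EV: "E \<subseteq> V \<times> V" and sy: "symrel E" and conn: "graph_connected V E"
    and eig: "is_eigenvalue V (lapw (\<lambda>x. real (gdeg E x)) V E) \<mu>" and nz: "\<mu> \<noteq> 0"
  shows "\<mu> \<ge> 1 / (real (card V))^2"
proof -
  let ?w = "\<lambda>x. real (gdeg E x)"
  obtain u where u: "\<exists>x\<in>V. u x \<noteq> 0" "\<forall>x\<in>V. lapw ?w V E u x = \<mu> * u x"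
    using eig unfolding is_eigenvalue_def by blast
  have "\<mu> * ip V (\<lambda>_. 1) u = ip V (\<lambda>_. 1) (lapw ?w V E u)"
    using u(2) unfolding ip_def by (simp add: sum_distrib_left)
  also have "\<dots> = ip V u (lapw ?w V E (\<lambda>_. 1))" by (rule lapw_symm[OF V EV sy])
  also have "\<dots> = 0" unfolding ip_def by (simp add: lapN_one[OF EV])
  finally have s0: "ip V (\<lambda>_. 1) u = 0" using nz by simp
  have q: "qf ?w V E u = \<mu> * ip V u u" by (rule eig_qf[OF u(2)])
  have q2: "qf ?w V E u = (\<Sum>p\<in>E. (u (fst p) - u (snd p))^2) / 2"
    using qf_formula[OF V EV sy, of ?w u] by simp
  have pos: "ip V u u > 0"
  proof -
    obtain x where x: "x \<in> V" "u x \<noteq> 0" using u(1) by blast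
    have "0 < u x * u x" using x(2) not_real_square_gt_zero by blast
    also have "\<dots> \<le> ip V u u" unfolding ip_def by (rule member_le_sum) (use x V in auto)
    finally show ?thesis .
  qed
  have "ip V u u \<le> (real (card V))^2 * qf ?w V E u"
    using poincare[OF V EV conn s0] by (simp only: q2)
  then have "ip V u u \<le> (real (card V))^2 * (\<mu> * ip V u u)" using q by simp
  then have "1 * ip V u u \<le> ((real (card V))^2 * \<mu>) * ip V u u" by (simp add: algebra_simps)
  then have "1 \<le> (real (card V))^2 * \<mu>" using pos by (simp add: mult_le_cancel_right)
  moreover have "card V > 0" using u(1) V card_gt_0_iff by blast
  ultimately show ?thesis by (simp add: field_simps)
qed

locale cay = group G for G (structure) +
  fixes S
  assumes S_sub: "S \<subseteq> carrier G" and S_fin: "finite S"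
    and S_sym: "\<forall>s\<in>S. inv s \<in> S" and S_id: "\<one> \<notin> S"
begin

lemma wp_nil: "word_prod G [] = \<one>" by (simp add: word_prod_def)

lemma wp_cons: "word_prod G (s # ws) = s \<otimes> word_prod G ws" by (simp add: word_prod_def)

lemma wp_carrier: "set ws \<subseteq> S \<Longrightarrow> word_prod G ws \<in> carrier G"
  by (induction ws) (use S_sub in \<open>auto simp: wp_nil wp_cons\<close>)

lemma wp_append: "set ws \<subseteq> S \<Longrightarrow> set vs \<subseteq> S \<Longrightarrow> word_prod G (ws @ vs) = word_prod G ws \<otimes> word_prod G vs"
proof (induction ws)
  case Nil then show ?case by (simp add: wp_nil wp_carrier)
next
  case (Cons s ws)
  then have s: "s \<in> carrier G" using S_sub by auto
  show ?case using Cons by (simp add: wp_cons m_assoc s wp_carrier)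
qed

lemma wp_snoc: "set ws \<subseteq> S \<Longrightarrow> s \<in> S \<Longrightarrow> word_prod G (ws @ [s]) = word_prod G ws \<otimes> s"
  using wp_append[of ws "[s]"] S_sub by (auto simp: wp_cons wp_nil)

lemma ball_eq: "cay_ball G S n = word_prod G ` {ws. set ws \<subseteq> S \<and> length ws \<le> n}"
  unfolding cay_ball_def by blast

lemma ball_finite: "finite (cay_ball G S n)"
  unfolding ball_eq by (rule finite_imageI[OF finite_lists_length_le[OF S_fin]])

lemma ball_carrier: "cay_ball G S n \<subseteq> carrier G"
  unfolding cay_ball_def using wp_carrier by blast

lemma one_ball: "\<one> \<in> cay_ball G S n"
  unfolding cay_ball_def by (rule CollectI, rule exI[of _ "[]"]) (simp add: wp_nil)

lemma ball0: "cay_ball G S 0 = {\<one>}"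
  unfolding cay_ball_def by (auto simp: wp_nil)

lemma ball_mono: "n \<le> m \<Longrightarrow> cay_ball G S n \<subseteq> cay_ball G S m"
  unfolding cay_ball_def by force

lemma ball_step: "x \<in> cay_ball G S n \<Longrightarrow> s \<in> S \<Longrightarrow> x \<otimes> s \<in> cay_ball G S (Suc n)"
proof -
  assume x: "x \<in> cay_ball G S n" and s: "s \<in> S"
  then obtain ws where ws: "x = word_prod G ws" "set ws \<subseteq> S" "length ws \<le> n"
    unfolding cay_ball_def by blast
  have "x \<otimes> s = word_prod G (ws @ [s])" using ws s by (simp add: wp_snoc)
  then show ?thesis unfolding cay_ball_def using ws s by force
qed

lemma ball_vol_pos: "ball_vol G S n \<ge> 1"
proof -
  have "card (cay_ball G S n) > 0" using one_ball[of n] ball_finite[of n] card_gt_0_iff by blast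
  then show ?thesis unfolding ball_vol_def by simp
qed

lemma ball_vol0: "ball_vol G S 0 = 1"
  unfolding ball_vol_def ball0 by simp

lemma mult_S_carrier: "x \<in> carrier G \<Longrightarrow> s \<in> S \<Longrightarrow> x \<otimes> s \<in> carrier G"
  using S_sub by auto

lemma inj_mult_S: "x \<in> carrier G \<Longrightarrow> inj_on (\<lambda>s. x \<otimes> s) S"
  by (rule inj_on_subset[OF inj_on_cmult S_sub])

lemma card_S_nbrs:
  assumes x: "x \<in> carrier G" and cay: "\<forall>(a, b)\<in>E. cay_edge G S a b"
  shows "card {s\<in>S. (x, x \<otimes> s) \<in> E} = card {z. (x, z) \<in> E}"
proof -
  have "(\<lambda>s. x \<otimes> s) ` {s\<in>S. (x, x \<otimes> s) \<in> E} = {z. (x, z) \<in> E}"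
  proof
    show "{z. (x, z) \<in> E} \<subseteq> (\<lambda>s. x \<otimes> s) ` {s\<in>S. (x, x \<otimes> s) \<in> E}"
    proof
      fix z assume "z \<in> {z. (x, z) \<in> E}"
      then have "(x, z) \<in> E" by simp
      then obtain s where "s \<in> S" "z = x \<otimes> s" using cay unfolding cay_edge_def by blast
      then show "z \<in> (\<lambda>s. x \<otimes> s) ` {s\<in>S. (x, x \<otimes> s) \<in> E}" using \<open>(x, z) \<in> E\<close> by blast
    qed
  qed auto
  moreover have "inj_on (\<lambda>s. x \<otimes> s) {s\<in>S. (x, x \<otimes> s) \<in> E}"
    using inj_mult_S[OF x] by (rule inj_on_subset) auto
  ultimately show ?thesis using card_image[of "\<lambda>s. x \<otimes> s" "{s\<in>S. (x, x \<otimes> s) \<in> E}"] by simp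
qed

lemma gdeg_le:
  assumes x: "x \<in> carrier G" and cay: "\<forall>(a, b)\<in>E. cay_edge G S a b"
  shows "gdeg E x \<le> card S"
proof -
  have "gdeg E x = card {s\<in>S. (x, x \<otimes> s) \<in> E}" unfolding gdeg_def using card_S_nbrs[OF x cay] by simp
  also have "\<dots> \<le> card S" by (rule card_mono[OF S_fin]) auto
  finally show ?thesis .
qed

end

context cay begin

lemma shift_sum_le:
  fixes h :: "'a \<Rightarrow> real"
  assumes W: "finite W" "W \<subseteq> carrier G" and U: "finite U" and p: "p \<in> carrier G"
    and nn: "\<And>y. h y \<ge> 0" and supp: "\<And>y. y \<in> carrier G \<Longrightarrow> h y \<noteq> 0 \<Longrightarrow> y \<in> U"
  shows "(\<Sum>x\<in>W. h (x \<otimes> p)) \<le> (\<Sum>y\<in>U. h y)"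
proof -
  have inj: "inj_on (\<lambda>x. x \<otimes> p) W" by (rule inj_on_subset[OF inj_on_multc[OF p] W(2)])
  have "(\<Sum>x\<in>W. h (x \<otimes> p)) = (\<Sum>y\<in>(\<lambda>x. x \<otimes> p) ` W. h y)"
    by (simp add: sum.reindex[OF inj])
  also have "\<dots> = (\<Sum>y\<in>(\<lambda>x. x \<otimes> p) ` W \<inter> U. h y)"
  proof (rule sum.mono_neutral_right)
    show "\<forall>i\<in>(\<lambda>x. x \<otimes> p) ` W - (\<lambda>x. x \<otimes> p) ` W \<inter> U. h i = 0"
    proof
      fix i assume "i \<in> (\<lambda>x. x \<otimes> p) ` W - (\<lambda>x. x \<otimes> p) ` W \<inter> U"
      then obtain x where "x \<in> W" "i = x \<otimes> p" "i \<notin> U" by blast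
      then have "i \<in> carrier G" using W(2) p by auto
      then show "h i = 0" using supp \<open>i \<notin> U\<close> by blast
    qed
  qed (use W in auto)
  also have "\<dots> \<le> (\<Sum>y\<in>U. h y)" by (rule sum_mono2[OF U]) (auto simp: nn)
  finally show ?thesis .
qed

lemma path_ineq:
  fixes F :: "'a \<Rightarrow> real"
  assumes ws: "set ws \<subseteq> S" and x: "x \<in> carrier G"
  shows "(F x - F (x \<otimes> word_prod G ws))^2 \<le> real (length ws) *
     (\<Sum>i<length ws. (F (x \<otimes> word_prod G (take i ws)) - F ((x \<otimes> word_prod G (take i ws)) \<otimes> ws ! i))^2)"
proof -
  let ?L = "length ws"
  define a where "a i = F (x \<otimes> word_prod G (take i ws))" for i
  have a0: "a 0 = F x" unfolding a_def using x by (simp add: wp_nil)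
  have aL: "a ?L = F (x \<otimes> word_prod G ws)" unfolding a_def by simp
  have aS: "a (Suc i) = F ((x \<otimes> word_prod G (take i ws)) \<otimes> ws ! i)" if i: "i < ?L" for i
  proof -
    have t: "take (Suc i) ws = take i ws @ [ws ! i]" using i by (simp add: take_Suc_conv_app_nth)
    have st: "set (take i ws) \<subseteq> S" using ws set_take_subset[of i ws] by (rule subset_trans[rotated])
    have si: "ws ! i \<in> S" using ws i nth_mem by blast
    have "word_prod G (take (Suc i) ws) = word_prod G (take i ws) \<otimes> ws ! i"
      unfolding t by (rule wp_snoc[OF st si])
    then have "x \<otimes> word_prod G (take (Suc i) ws) = (x \<otimes> word_prod G (take i ws)) \<otimes> ws ! i"
      using m_assoc[OF x wp_carrier[OF st], of "ws ! i"] si S_sub by auto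
    then show ?thesis unfolding a_def by simp
  qed
  have tel: "(\<Sum>i<?L. a i - a (Suc i)) = a 0 - a ?L" by (rule sum_lessThan_telescope')
  have e1: "F x - F (x \<otimes> word_prod G ws) = (\<Sum>i<?L. (a i - a (Suc i)) * 1)"
    unfolding mult_1_right tel a0 aL ..
  have "(F x - F (x \<otimes> word_prod G ws))^2 = (\<Sum>i<?L. (a i - a (Suc i)) * 1)^2" unfolding e1 ..
  also have "\<dots> \<le> (\<Sum>i<?L. (a i - a (Suc i))^2) * (\<Sum>i<?L. 1^2)"
    by (rule Cauchy_Schwarz_ineq_sum[of "\<lambda>i. a i - a (Suc i)" "\<lambda>_. 1"])
  also have "(\<Sum>i<?L. (1::real)^2) = real ?L" by simp
  also have "(\<Sum>i<?L. (a i - a (Suc i))^2) * real ?L = real ?L * (\<Sum>i<?L. (a i - a (Suc i))^2)" by (rule mult.commute)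
  also have "(\<Sum>i<?L. (a i - a (Suc i))^2) = (\<Sum>i<?L. (F (x \<otimes> word_prod G (take i ws)) - F ((x \<otimes> word_prod G (take i ws)) \<otimes> ws ! i))^2)"
  proof (rule sum.cong)
    fix i assume "i \<in> {..<?L}"
    then have i: "i < ?L" by simp
    have "a i - a (Suc i) = F (x \<otimes> word_prod G (take i ws)) - F ((x \<otimes> word_prod G (take i ws)) \<otimes> ws ! i)"
      using aS[OF i] unfolding a_def by simp
    then show "(a i - a (Suc i))^2 = (F (x \<otimes> word_prod G (take i ws)) - F ((x \<otimes> word_prod G (take i ws)) \<otimes> ws ! i))^2"
      by simp
  qed simp
  finally show ?thesis .
qed

lemma nbr_image:
  assumes x: "x \<in> carrier G" and cay: "\<forall>(a, b)\<in>E. cay_edge G S a b"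
  shows "(\<lambda>s. x \<otimes> s) ` {s\<in>S. (x, x \<otimes> s) \<in> E} = {z. (x, z) \<in> E}"
    "inj_on (\<lambda>s. x \<otimes> s) {s\<in>S. (x, x \<otimes> s) \<in> E}"
proof -
  show "(\<lambda>s. x \<otimes> s) ` {s\<in>S. (x, x \<otimes> s) \<in> E} = {z. (x, z) \<in> E}"
  proof
    show "{z. (x, z) \<in> E} \<subseteq> (\<lambda>s. x \<otimes> s) ` {s\<in>S. (x, x \<otimes> s) \<in> E}"
    proof
      fix z assume "z \<in> {z. (x, z) \<in> E}"
      then have "(x, z) \<in> E" by simp
      then obtain s where "s \<in> S" "z = x \<otimes> s" using cay unfolding cay_edge_def by blast
      then show "z \<in> (\<lambda>s. x \<otimes> s) ` {s\<in>S. (x, x \<otimes> s) \<in> E}" using \<open>(x, z) \<in> E\<close> by blast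
    qed
  qed auto
  show "inj_on (\<lambda>s. x \<otimes> s) {s\<in>S. (x, x \<otimes> s) \<in> E}"
    using inj_mult_S[OF x] by (rule inj_on_subset) auto
qed

lemma card_non_nbrs:
  assumes x: "x \<in> carrier G" and cay: "\<forall>(a, b)\<in>E. cay_edge G S a b"
  shows "real (card {s\<in>S. (x, x \<otimes> s) \<notin> E}) = real (card S) - real (gdeg E x)"
proof -
  have c: "card {s\<in>S. (x, x \<otimes> s) \<in> E} = gdeg E x"
    unfolding gdeg_def using card_S_nbrs[OF x cay] by simp
  have "{s\<in>S. (x, x \<otimes> s) \<notin> E} = S - {s\<in>S. (x, x \<otimes> s) \<in> E}" by blast
  then have "card {s\<in>S. (x, x \<otimes> s) \<notin> E} = card S - card {s\<in>S. (x, x \<otimes> s) \<in> E}"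
    using card_Diff_subset[of "{s\<in>S. (x, x \<otimes> s) \<in> E}" S] S_fin by (simp add: finite_subset)
  moreover have "card {s\<in>S. (x, x \<otimes> s) \<in> E} \<le> card S" by (rule card_mono[OF S_fin]) auto
  ultimately show ?thesis using c by (simp add: of_nat_diff)
qed

end

lemma sq_diff_le: "((a::real) - b)^2 \<le> 2 * a^2 + 2 * b^2"
proof -
  have "0 \<le> (a + b)^2" by simp
  then show ?thesis by (simp add: power2_eq_square algebra_simps)
qed

lemma sum_if_const: "finite XX \<Longrightarrow> (\<Sum>s\<in>XX. if P s then (c::real) else 0) = real (card {s\<in>XX. P s}) * c"
  by (simp add: sum.inter_filter[symmetric])

context cay begin

lemma card_inv_swap:
  assumes z: "z \<in> carrier G" and sy: "symrel E"
  shows "card {s\<in>S. (z \<otimes> inv s, z) \<notin> E} = card {s\<in>S. (z, z \<otimes> s) \<notin> E}"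
proof -
  have eq: "{s\<in>S. (z \<otimes> inv s, z) \<notin> E} = (\<lambda>s. inv s) ` {s\<in>S. (z, z \<otimes> s) \<notin> E}"
  proof
    show "{s\<in>S. (z \<otimes> inv s, z) \<notin> E} \<subseteq> (\<lambda>s. inv s) ` {s\<in>S. (z, z \<otimes> s) \<notin> E}"
    proof
      fix s assume s: "s \<in> {s\<in>S. (z \<otimes> inv s, z) \<notin> E}"
      then have sS: "s \<in> S" and nE: "(z \<otimes> inv s, z) \<notin> E" by auto
      have sc: "s \<in> carrier G" using sS S_sub by auto
      have "inv s \<in> S" using S_sym sS by auto
      moreover have "(z, z \<otimes> inv s) \<notin> E" using nE sy unfolding symrel_def by auto
      moreover have "s = inv (inv s)" using sc by simp
      ultimately show "s \<in> (\<lambda>s. inv s) ` {s\<in>S. (z, z \<otimes> s) \<notin> E}" by blast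
    qed
    show "(\<lambda>s. inv s) ` {s\<in>S. (z, z \<otimes> s) \<notin> E} \<subseteq> {s\<in>S. (z \<otimes> inv s, z) \<notin> E}"
    proof
      fix s' assume "s' \<in> (\<lambda>s. inv s) ` {s\<in>S. (z, z \<otimes> s) \<notin> E}"
      then obtain s where s: "s \<in> S" "(z, z \<otimes> s) \<notin> E" "s' = inv s" by blast
      have sc: "s \<in> carrier G" using s S_sub by auto
      have "inv s \<in> S" using S_sym s by auto
      moreover have "(z \<otimes> inv (inv s), z) \<notin> E" using s(2) sc sy unfolding symrel_def by auto
      ultimately show "s' \<in> {s\<in>S. (z \<otimes> inv s, z) \<notin> E}" using s(3) by simp
    qed
  qed
  have inj: "inj_on (\<lambda>s. inv s) {s\<in>S. (z, z \<otimes> s) \<notin> E}"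
    by (rule inj_on_subset[OF inv_inj]) (use S_sub in auto)
  show ?thesis unfolding eq by (rule card_image[OF inj])
qed

lemma Es_bound:
  fixes f :: "'a \<Rightarrow> real"
  assumes VC: "V \<subseteq> carrier G" and V: "finite V" and EV: "E \<subseteq> V \<times> V" and sy: "symrel E"
    and cay: "\<forall>(a, b)\<in>E. cay_edge G S a b"
    and U: "finite U" "V \<subseteq> U" "U \<subseteq> carrier G" and Uinv: "\<forall>z\<in>V. \<forall>s\<in>S. z \<otimes> inv s \<in> U"
    and F: "F = (\<lambda>x. if x \<in> V then f x else 0)"
  shows "(\<Sum>s\<in>S. \<Sum>y\<in>U. (F y - F (y \<otimes> s))^2)
     \<le> (\<Sum>p\<in>E. (f (fst p) - f (snd p))^2) + 4 * (\<Sum>x\<in>V. (real (card S) - real (gdeg E x)) * (f x)^2)"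
proof -
  define A where "A y s = (if y \<in> V \<and> (y, y \<otimes> s) \<in> E then (f y - f (y \<otimes> s))^2 else 0)" for y s
  define B where "B y s = (if y \<in> V \<and> (y, y \<otimes> s) \<notin> E then 2 * (f y)^2 else 0)" for y s
  define C where "C y s = (if y \<otimes> s \<in> V \<and> (y, y \<otimes> s) \<notin> E then 2 * (f (y \<otimes> s))^2 else 0)" for y s
  let ?k = "real (card S)"
  have pt: "(F y - F (y \<otimes> s))^2 \<le> A y s + B y s + C y s" for y s
  proof (cases "(y, y \<otimes> s) \<in> E")
    case True
    then have "y \<in> V" "y \<otimes> s \<in> V" using EV by auto
    then show ?thesis using True by (simp add: A_def B_def C_def F)
  next
    case False
    have "(F y - F (y \<otimes> s))^2 \<le> 2 * (F y)^2 + 2 * (F (y \<otimes> s))^2" by (rule sq_diff_le)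
    also have "\<dots> = B y s + C y s" using False by (simp add: B_def C_def F)
    also have "\<dots> = A y s + B y s + C y s" using False by (simp add: A_def)
    finally show ?thesis .
  qed
  have "(\<Sum>s\<in>S. \<Sum>y\<in>U. (F y - F (y \<otimes> s))^2) \<le> (\<Sum>s\<in>S. \<Sum>y\<in>U. A y s + B y s + C y s)"
    by (intro sum_mono pt)
  also have "\<dots> = (\<Sum>s\<in>S. \<Sum>y\<in>U. A y s) + (\<Sum>s\<in>S. \<Sum>y\<in>U. B y s) + (\<Sum>s\<in>S. \<Sum>y\<in>U. C y s)"
    by (simp add: sum.distrib)
  finally have main: "(\<Sum>s\<in>S. \<Sum>y\<in>U. (F y - F (y \<otimes> s))^2) \<le> (\<Sum>s\<in>S. \<Sum>y\<in>U. A y s) + (\<Sum>s\<in>S. \<Sum>y\<in>U. B y s) + (\<Sum>s\<in>S. \<Sum>y\<in>U. C y s)" .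
  have restrictV: "(\<Sum>s\<in>S. \<Sum>y\<in>U. H y s) = (\<Sum>y\<in>V. \<Sum>s\<in>S. H y s)" if H0: "\<And>y s. y \<notin> V \<Longrightarrow> H y s = 0" for H :: "'a \<Rightarrow> 'a \<Rightarrow> real"
  proof -
    have "(\<Sum>s\<in>S. \<Sum>y\<in>U. H y s) = (\<Sum>y\<in>U. \<Sum>s\<in>S. H y s)" by (rule sum.swap)
    also have "\<dots> = (\<Sum>y\<in>V. \<Sum>s\<in>S. H y s)"
      by (rule sum.mono_neutral_right[OF U(1) U(2)]) (simp add: H0)
    finally show ?thesis .
  qed
  have SA: "(\<Sum>s\<in>S. \<Sum>y\<in>U. A y s) = (\<Sum>p\<in>E. (f (fst p) - f (snd p))^2)"
  proof -
    have "(\<Sum>s\<in>S. \<Sum>y\<in>U. A y s) = (\<Sum>y\<in>V. \<Sum>s\<in>S. A y s)"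
      by (rule restrictV) (simp add: A_def)
    also have "\<dots> = (\<Sum>y\<in>V. \<Sum>z\<in>{z. (y, z) \<in> E}. (f y - f z)^2)"
    proof (rule sum.cong[OF refl])
      fix y assume y: "y \<in> V"
      have yc: "y \<in> carrier G" using y VC by auto
      have "(\<Sum>s\<in>S. A y s) = (\<Sum>s\<in>S. if (y, y \<otimes> s) \<in> E then (f y - f (y \<otimes> s))^2 else 0)"
        by (rule sum.cong) (simp_all add: A_def y)
      also have "\<dots> = (\<Sum>s\<in>{s\<in>S. (y, y \<otimes> s) \<in> E}. (f y - f (y \<otimes> s))^2)"
        by (simp add: sum.inter_filter[OF S_fin, symmetric])
      also have "\<dots> = (\<Sum>z\<in>(\<lambda>s. y \<otimes> s) ` {s\<in>S. (y, y \<otimes> s) \<in> E}. (f y - f z)^2)"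
        by (rule sum.reindex[OF nbr_image(2)[OF yc cay], symmetric, unfolded comp_def])
      also have "\<dots> = (\<Sum>z\<in>{z. (y, z) \<in> E}. (f y - f z)^2)"
        unfolding nbr_image(1)[OF yc cay] ..
      finally show "(\<Sum>s\<in>S. A y s) = (\<Sum>z\<in>{z. (y, z) \<in> E}. (f y - f z)^2)" .
    qed
    also have "\<dots> = (\<Sum>p\<in>Sigma V (\<lambda>y. {z. (y, z) \<in> E}). (f (fst p) - f (snd p))^2)"
    proof (subst sum.Sigma)
      show "finite V" by (rule V)
      show "\<forall>y\<in>V. finite {z. (y, z) \<in> E}"
        using V EV by (auto intro: finite_subset[of _ V])
    qed (simp add: case_prod_beta)
    also have "Sigma V (\<lambda>y. {z. (y, z) \<in> E}) = E" using EV by auto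
    finally show ?thesis .
  qed
  have SB: "(\<Sum>s\<in>S. \<Sum>y\<in>U. B y s) = 2 * (\<Sum>x\<in>V. (?k - real (gdeg E x)) * (f x)^2)"
  proof -
    have "(\<Sum>s\<in>S. \<Sum>y\<in>U. B y s) = (\<Sum>y\<in>V. \<Sum>s\<in>S. B y s)"
      by (rule restrictV) (simp add: B_def)
    also have "\<dots> = (\<Sum>y\<in>V. 2 * ((?k - real (gdeg E y)) * (f y)^2))"
    proof (rule sum.cong[OF refl])
      fix y assume y: "y \<in> V"
      have yc: "y \<in> carrier G" using y VC by auto
      have "(\<Sum>s\<in>S. B y s) = (\<Sum>s\<in>S. if (y, y \<otimes> s) \<notin> E then 2 * (f y)^2 else 0)"
        by (rule sum.cong) (simp_all add: B_def y)
      also have "\<dots> = real (card {s\<in>S. (y, y \<otimes> s) \<notin> E}) * (2 * (f y)^2)"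
        by (rule sum_if_const[OF S_fin])
      also have "\<dots> = 2 * ((?k - real (gdeg E y)) * (f y)^2)"
        unfolding card_non_nbrs[OF yc cay] by simp
      finally show "(\<Sum>s\<in>S. B y s) = 2 * ((?k - real (gdeg E y)) * (f y)^2)" .
    qed
    also have "\<dots> = 2 * (\<Sum>x\<in>V. (?k - real (gdeg E x)) * (f x)^2)"
      by (simp add: sum_distrib_left)
    finally show ?thesis .
  qed
  have SC: "(\<Sum>s\<in>S. \<Sum>y\<in>U. C y s) = 2 * (\<Sum>x\<in>V. (?k - real (gdeg E x)) * (f x)^2)"
  proof -
    have inner: "(\<Sum>y\<in>U. C y s) = (\<Sum>z\<in>V. if (z \<otimes> inv s, z) \<notin> E then 2 * (f z)^2 else 0)"
      if s: "s \<in> S" for s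
    proof -
      have sc: "s \<in> carrier G" using s S_sub by auto
      have "(\<Sum>y\<in>U. C y s) = (\<Sum>y\<in>U. if y \<otimes> s \<in> V then (if (y, y \<otimes> s) \<notin> E then 2 * (f (y \<otimes> s))^2 else 0) else 0)"
        by (rule sum.cong) (simp_all add: C_def)
      also have "\<dots> = (\<Sum>y\<in>{y\<in>U. y \<otimes> s \<in> V}. if (y, y \<otimes> s) \<notin> E then 2 * (f (y \<otimes> s))^2 else 0)"
        by (simp add: sum.inter_filter[OF U(1), symmetric])
      also have "\<dots> = (\<Sum>z\<in>V. if (z \<otimes> inv s, z) \<notin> E then 2 * (f z)^2 else 0)"
      proof (rule sum.reindex_bij_witness[of _ "\<lambda>z. z \<otimes> inv s" "\<lambda>y. y \<otimes> s"])
        fix y assume "y \<in> {y\<in>U. y \<otimes> s \<in> V}"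
        then have yU: "y \<in> U" and ysV: "y \<otimes> s \<in> V" by auto
        have yc: "y \<in> carrier G" using yU U(3) by auto
        show "y \<otimes> s \<otimes> inv s = y" using yc sc by (simp add: m_assoc)
        show "y \<otimes> s \<in> V" by (rule ysV)
        show "(if (y \<otimes> s \<otimes> inv s, y \<otimes> s) \<notin> E then 2 * (f (y \<otimes> s))^2 else 0)
              = (if (y, y \<otimes> s) \<notin> E then 2 * (f (y \<otimes> s))^2 else 0)"
          using yc sc by (simp add: m_assoc)
      next
        fix z assume z: "z \<in> V"
        have zc: "z \<in> carrier G" using z VC by auto
        show "z \<otimes> inv s \<otimes> s = z" using zc sc by (simp add: m_assoc)
        show "z \<otimes> inv s \<in> {y\<in>U. y \<otimes> s \<in> V}" using Uinv z s zc sc by (simp add: m_assoc)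
      qed
      finally show ?thesis .
    qed
    have "(\<Sum>s\<in>S. \<Sum>y\<in>U. C y s) = (\<Sum>s\<in>S. \<Sum>z\<in>V. if (z \<otimes> inv s, z) \<notin> E then 2 * (f z)^2 else 0)"
      by (rule sum.cong[OF refl]) (rule inner)
    also have "\<dots> = (\<Sum>z\<in>V. \<Sum>s\<in>S. if (z \<otimes> inv s, z) \<notin> E then 2 * (f z)^2 else 0)"
      by (rule sum.swap)
    also have "\<dots> = (\<Sum>z\<in>V. 2 * ((?k - real (gdeg E z)) * (f z)^2))"
    proof (rule sum.cong[OF refl])
      fix z assume z: "z \<in> V"
      have zc: "z \<in> carrier G" using z VC by auto
      have "(\<Sum>s\<in>S. if (z \<otimes> inv s, z) \<notin> E then 2 * (f z)^2 else 0)
          = real (card {s\<in>S. (z \<otimes> inv s, z) \<notin> E}) * (2 * (f z)^2)"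
        by (rule sum_if_const[OF S_fin])
      also have "\<dots> = real (card {s\<in>S. (z, z \<otimes> s) \<notin> E}) * (2 * (f z)^2)"
        unfolding card_inv_swap[OF zc sy] ..
      also have "\<dots> = 2 * ((?k - real (gdeg E z)) * (f z)^2)"
        unfolding card_non_nbrs[OF zc cay] by simp
      finally show "(\<Sum>s\<in>S. if (z \<otimes> inv s, z) \<notin> E then 2 * (f z)^2 else 0) = 2 * ((?k - real (gdeg E z)) * (f z)^2)" .
    qed
    also have "\<dots> = 2 * (\<Sum>x\<in>V. (?k - real (gdeg E x)) * (f x)^2)"
      by (simp add: sum_distrib_left)
    finally show ?thesis .
  qed
  show ?thesis using main SA SB SC by simp
qed

end

context cay begin

lemma FK:
  fixes f :: "'a \<Rightarrow> real" and r :: nat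
  assumes VC: "V \<subseteq> carrier G" and V: "finite V" and EV: "E \<subseteq> V \<times> V" and sy: "symrel E"
    and cay: "\<forall>(a, b)\<in>E. cay_edge G S a b"
    and vol: "real (ball_vol G S r) \<ge> 2 * real (card V)"
  shows "ip V f f \<le> 4 * (real r)^2 * qf (\<lambda>_. real (card S)) V E f"
proof -
  define F where "F = (\<lambda>x. if x \<in> V then f x else 0)"
  define T where "T = cay_ball G S r"
  define W where "W = (\<lambda>p. fst p \<otimes> inv (snd p)) ` (V \<times> T)"
  define U where "U = V \<union> (\<lambda>p. fst p \<otimes> inv (snd p)) ` (V \<times> S)"
  define Es where "Es = (\<Sum>s\<in>S. \<Sum>y\<in>U. (F y - F (y \<otimes> s))^2)"
  have Tfin: "finite T" unfolding T_def by (rule ball_finite)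
  have TC: "T \<subseteq> carrier G" unfolding T_def by (rule ball_carrier)
  have cardT: "card T = ball_vol G S r" unfolding T_def ball_vol_def ..
  have Wfin: "finite W" unfolding W_def using V Tfin by simp
  have WC: "W \<subseteq> carrier G" unfolding W_def using VC TC by (auto simp: subset_iff)
  have VW: "V \<subseteq> W"
  proof
    fix v assume v: "v \<in> V"
    have "(v, \<one>) \<in> V \<times> T" using v one_ball unfolding T_def by auto
    moreover have "v = fst (v, \<one>) \<otimes> inv (snd (v, \<one>))" using v VC by auto
    ultimately show "v \<in> W" unfolding W_def by blast
  qed
  have Ufin: "finite U" unfolding U_def using V S_fin by simp
  have UC: "U \<subseteq> carrier G" unfolding U_def using VC S_sub by (auto simp: subset_iff)
  have VU: "V \<subseteq> U" unfolding U_def by auto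
  have Uinv: "\<forall>z\<in>V. \<forall>s\<in>S. z \<otimes> inv s \<in> U"
    unfolding U_def by (auto intro!: image_eqI[where x="(z, s)" for z s])
  have Fz: "F y = 0" if "y \<notin> V" for y using that by (simp add: F_def)
  have supp: "y \<in> U" if yc: "y \<in> carrier G" and s: "s \<in> S" and nz: "(F y - F (y \<otimes> s))^2 \<noteq> 0" for y s
  proof (cases "y \<in> V")
    case True then show ?thesis using VU by auto
  next
    case False
    then have "F (y \<otimes> s) \<noteq> 0" using nz Fz by auto
    then have ysV: "y \<otimes> s \<in> V" using Fz by blast
    have sc: "s \<in> carrier G" using s S_sub by auto
    have "y = (y \<otimes> s) \<otimes> inv s" using yc sc by (simp add: m_assoc)
    then show ?thesis using Uinv ysV s by metis
  qed
  have Es_nn: "Es \<ge> 0" unfolding Es_def by (intro sum_nonneg) simp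
  have step_c: "(\<Sum>x\<in>W. (F x - F (x \<otimes> g))^2) \<le> (real r)^2 * Es" if g: "g \<in> T" for g
  proof -
    obtain ws where ws: "g = word_prod G ws" "set ws \<subseteq> S" "length ws \<le> r"
      using g unfolding T_def cay_ball_def by blast
    let ?L = "length ws"
    define p where "p i = word_prod G (take i ws)" for i
    have pc: "p i \<in> carrier G" for i
      unfolding p_def by (rule wp_carrier) (use ws(2) set_take_subset[of i ws] in \<open>rule subset_trans[rotated]\<close>)
    have wsi: "ws ! i \<in> S" if "i < ?L" for i by (rule subsetD[OF ws(2) nth_mem[OF that]])
    have inner: "(\<Sum>x\<in>W. (F (x \<otimes> p i) - F ((x \<otimes> p i) \<otimes> ws ! i))^2) \<le> Es" if i: "i < ?L" for i
    proof -
      have "(\<Sum>x\<in>W. (F (x \<otimes> p i) - F ((x \<otimes> p i) \<otimes> ws ! i))^2) \<le> (\<Sum>y\<in>U. (F y - F (y \<otimes> ws ! i))^2)"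
        by (rule shift_sum_le[OF Wfin WC Ufin pc, of "\<lambda>y. (F y - F (y \<otimes> ws ! i))^2"])
          (auto intro: supp[OF _ wsi[OF i]])
      also have "\<dots> \<le> Es" unfolding Es_def
        by (rule member_le_sum[of "ws ! i" S "\<lambda>s. \<Sum>y\<in>U. (F y - F (y \<otimes> s))^2", OF wsi[OF i] _ S_fin])
          (intro sum_nonneg, simp)
      finally show ?thesis .
    qed
    have "(\<Sum>x\<in>W. (F x - F (x \<otimes> g))^2)
        \<le> (\<Sum>x\<in>W. real ?L * (\<Sum>i<?L. (F (x \<otimes> p i) - F ((x \<otimes> p i) \<otimes> ws ! i))^2))"
    proof (rule sum_mono)
      fix x assume "x \<in> W"
      then have xc: "x \<in> carrier G" using WC by auto
      show "(F x - F (x \<otimes> g))^2 \<le> real ?L * (\<Sum>i<?L. (F (x \<otimes> p i) - F ((x \<otimes> p i) \<otimes> ws ! i))^2)"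
        unfolding ws(1) p_def by (rule path_ineq[OF ws(2) xc])
    qed
    also have "\<dots> = real ?L * (\<Sum>i<?L. \<Sum>x\<in>W. (F (x \<otimes> p i) - F ((x \<otimes> p i) \<otimes> ws ! i))^2)"
      by (simp add: sum_distrib_left[symmetric] sum.swap[of _ W])
    also have "\<dots> \<le> real ?L * (\<Sum>i<?L. Es)"
      by (intro mult_left_mono sum_mono inner) auto
    also have "\<dots> = real ?L * real ?L * Es" by simp
    also have "\<dots> \<le> real r * real r * Es"
      using ws(3) Es_nn by (intro mult_right_mono mult_mono) auto
    finally show ?thesis by (simp add: power2_eq_square)
  qed
  have step_d: "(\<Sum>x\<in>W. (F x - F (x \<otimes> g))^2) = 2 * ip V f f - 2 * (\<Sum>x\<in>V. f x * F (x \<otimes> g))"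
    if g: "g \<in> T" for g
  proof -
    have gc: "g \<in> carrier G" using g TC by auto
    have a: "(\<Sum>x\<in>W. (F x)^2) = ip V f f"
    proof -
      have "(\<Sum>x\<in>W. (F x)^2) = (\<Sum>x\<in>V. (F x)^2)"
        by (rule sum.mono_neutral_right[OF Wfin VW]) (simp add: Fz)
      then show ?thesis by (simp add: ip_def F_def power2_eq_square)
    qed
    have b: "(\<Sum>x\<in>W. (F (x \<otimes> g))^2) = ip V f f"
    proof -
      have inj: "inj_on (\<lambda>x. x \<otimes> g) W" by (rule inj_on_subset[OF inj_on_multc[OF gc] WC])
      have sub: "V \<subseteq> (\<lambda>x. x \<otimes> g) ` W"
      proof
        fix v assume v: "v \<in> V"
        have vc: "v \<in> carrier G" using v VC by auto
        have "v \<otimes> inv g \<in> W" unfolding W_def using v g by (auto intro!: image_eqI[where x="(v, g)"])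
        moreover have "v = (v \<otimes> inv g) \<otimes> g" using vc gc by (simp add: m_assoc)
        ultimately show "v \<in> (\<lambda>x. x \<otimes> g) ` W" by blast
      qed
      have "(\<Sum>x\<in>W. (F (x \<otimes> g))^2) = (\<Sum>y\<in>(\<lambda>x. x \<otimes> g) ` W. (F y)^2)"
        by (simp add: sum.reindex[OF inj])
      also have "\<dots> = (\<Sum>y\<in>V. (F y)^2)"
        by (rule sum.mono_neutral_right[OF _ sub]) (use Wfin Fz in auto)
      finally show ?thesis by (simp add: ip_def F_def power2_eq_square)
    qed
    have c: "(\<Sum>x\<in>W. F x * F (x \<otimes> g)) = (\<Sum>x\<in>V. f x * F (x \<otimes> g))"
    proof -
      have "(\<Sum>x\<in>W. F x * F (x \<otimes> g)) = (\<Sum>x\<in>V. F x * F (x \<otimes> g))"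
        by (rule sum.mono_neutral_right[OF Wfin VW]) (simp add: Fz)
      then show ?thesis by (simp add: F_def)
    qed
    have "(\<Sum>x\<in>W. (F x - F (x \<otimes> g))^2) = (\<Sum>x\<in>W. (F x)^2) + (\<Sum>x\<in>W. (F (x \<otimes> g))^2) - 2 * (\<Sum>x\<in>W. F x * F (x \<otimes> g))"
      by (simp add: power2_diff sum.distrib sum_subtractf sum_distrib_left mult.assoc)
    then show ?thesis using a b c by simp
  qed
  define \<sigma> where "\<sigma> = (\<Sum>y\<in>V. \<bar>f y\<bar>)"
  have step_e: "(\<Sum>g\<in>T. \<Sum>x\<in>V. f x * F (x \<otimes> g)) \<le> real (card V) * ip V f f"
  proof -
    have bnd: "\<bar>\<Sum>g\<in>T. F (x \<otimes> g)\<bar> \<le> \<sigma>" if x: "x \<in> V" for x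
    proof -
      have xc: "x \<in> carrier G" using x VC by auto
      have inj: "inj_on (\<lambda>g. x \<otimes> g) T" by (rule inj_on_subset[OF inj_on_cmult[OF xc] TC])
      have "\<bar>\<Sum>g\<in>T. F (x \<otimes> g)\<bar> \<le> (\<Sum>g\<in>T. \<bar>F (x \<otimes> g)\<bar>)" by (rule sum_abs)
      also have "\<dots> = (\<Sum>y\<in>(\<lambda>g. x \<otimes> g) ` T. \<bar>F y\<bar>)" by (simp add: sum.reindex[OF inj])
      also have "\<dots> \<le> (\<Sum>y\<in>(\<lambda>g. x \<otimes> g) ` T \<union> V. \<bar>F y\<bar>)"
        by (rule sum_mono2) (use Tfin V in auto)
      also have "\<dots> = (\<Sum>y\<in>V. \<bar>F y\<bar>)"
        by (rule sum.mono_neutral_right) (use Tfin V Fz in auto)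
      also have "\<dots> = \<sigma>" unfolding \<sigma>_def by (simp add: F_def)
      finally show ?thesis .
    qed
    have "(\<Sum>g\<in>T. \<Sum>x\<in>V. f x * F (x \<otimes> g)) = (\<Sum>x\<in>V. f x * (\<Sum>g\<in>T. F (x \<otimes> g)))"
      by (simp add: sum_distrib_left sum.swap[of _ T])
    also have "\<dots> \<le> (\<Sum>x\<in>V. \<bar>f x\<bar> * \<sigma>)"
    proof (rule sum_mono)
      fix x assume x: "x \<in> V"
      have "f x * (\<Sum>g\<in>T. F (x \<otimes> g)) \<le> \<bar>f x * (\<Sum>g\<in>T. F (x \<otimes> g))\<bar>" by (rule abs_ge_self)
      also have "\<dots> = \<bar>f x\<bar> * \<bar>\<Sum>g\<in>T. F (x \<otimes> g)\<bar>" by (rule abs_mult)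
      also have "\<dots> \<le> \<bar>f x\<bar> * \<sigma>" by (rule mult_left_mono[OF bnd[OF x] abs_ge_zero])
      finally show "f x * (\<Sum>g\<in>T. F (x \<otimes> g)) \<le> \<bar>f x\<bar> * \<sigma>" .
    qed
    also have "\<dots> = \<sigma> * \<sigma>" unfolding \<sigma>_def by (simp add: sum_distrib_right)
    also have "\<dots> = (\<Sum>y\<in>V. \<bar>f y\<bar> * 1)^2" unfolding \<sigma>_def by (simp add: power2_eq_square)
    also have "\<dots> \<le> (\<Sum>y\<in>V. \<bar>f y\<bar>^2) * (\<Sum>y\<in>V. 1^2)"
      by (rule Cauchy_Schwarz_ineq_sum[of "\<lambda>y. \<bar>f y\<bar>" "\<lambda>_. 1"])
    also have "\<dots> = real (card V) * ip V f f" by (simp add: ip_def power2_eq_square)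
    finally show ?thesis .
  qed
  have ipnn: "ip V f f \<ge> 0" by (rule ip_self_nonneg)
  have "(\<Sum>g\<in>T. \<Sum>x\<in>W. (F x - F (x \<otimes> g))^2) = (\<Sum>g\<in>T. 2 * ip V f f - 2 * (\<Sum>x\<in>V. f x * F (x \<otimes> g)))"
    by (rule sum.cong[OF refl]) (rule step_d)
  also have "\<dots> = 2 * real (card T) * ip V f f - 2 * (\<Sum>g\<in>T. \<Sum>x\<in>V. f x * F (x \<otimes> g))"
    by (simp add: sum_subtractf sum_distrib_left)
  finally have lowS: "(\<Sum>g\<in>T. \<Sum>x\<in>W. (F x - F (x \<otimes> g))^2) \<ge> 2 * real (card T) * ip V f f - 2 * (real (card V) * ip V f f)"
    using step_e by simp
  have upS: "(\<Sum>g\<in>T. \<Sum>x\<in>W. (F x - F (x \<otimes> g))^2) \<le> real (card T) * ((real r)^2 * Es)"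
  proof -
    have "(\<Sum>g\<in>T. \<Sum>x\<in>W. (F x - F (x \<otimes> g))^2) \<le> (\<Sum>g\<in>T. (real r)^2 * Es)"
      by (rule sum_mono) (rule step_c)
    then show ?thesis by simp
  qed
  have vol': "real (card T) \<ge> 2 * real (card V)" using vol cardT by simp
  have "real (card T) * ip V f f \<le> 2 * real (card T) * ip V f f - 2 * (real (card V) * ip V f f)"
  proof -
    have "2 * real (card V) * ip V f f \<le> real (card T) * ip V f f"
      by (rule mult_right_mono[OF vol' ipnn])
    then show ?thesis by (simp add: algebra_simps)
  qed
  also have "\<dots> \<le> real (card T) * ((real r)^2 * Es)" using lowS upS by simp
  finally have "real (card T) * ip V f f \<le> real (card T) * ((real r)^2 * Es)" .
  moreover have "card T > 0" using one_ball[of r] Tfin unfolding T_def by (auto simp: card_gt_0_iff)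
  ultimately have ipEs: "ip V f f \<le> (real r)^2 * Es" by simp
  have EsB: "Es \<le> (\<Sum>p\<in>E. (f (fst p) - f (snd p))^2) + 4 * (\<Sum>x\<in>V. (real (card S) - real (gdeg E x)) * (f x)^2)"
    unfolding Es_def by (rule Es_bound[OF VC V EV sy cay Ufin VU UC Uinv F_def])
  have qfE: "qf (\<lambda>_. real (card S)) V E f = (\<Sum>x\<in>V. (real (card S) - real (gdeg E x)) * (f x)^2) + (\<Sum>p\<in>E. (f (fst p) - f (snd p))^2) / 2"
    by (rule qf_formula[OF V EV sy])
  have Dnn: "(\<Sum>p\<in>E. (f (fst p) - f (snd p))^2) \<ge> 0" by (intro sum_nonneg) simp
  have "Es \<le> 4 * qf (\<lambda>_. real (card S)) V E f" using EsB qfE Dnn by simp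
  then have "(real r)^2 * Es \<le> (real r)^2 * (4 * qf (\<lambda>_. real (card S)) V E f)"
    by (rule mult_left_mono) simp
  then show ?thesis using ipEs by simp
qed

end

lemma eig_lower_from_qf:
  assumes V: "finite V" and eig: "is_eigenvalue V (lapw w V E) \<mu>"
    and q: "\<And>f. c * ip V f f \<le> qf w V E f"
  shows "c \<le> \<mu>"
proof -
  obtain u where u: "\<exists>x\<in>V. u x \<noteq> 0" "\<forall>x\<in>V. lapw w V E u x = \<mu> * u x"
    using eig unfolding is_eigenvalue_def by blast
  have pos: "ip V u u > 0"
  proof -
    obtain x where x: "x \<in> V" "u x \<noteq> 0" using u(1) by blast
    have "0 < u x * u x" using x(2) not_real_square_gt_zero by blast
    also have "\<dots> \<le> ip V u u" unfolding ip_def by (rule member_le_sum) (use x V in auto)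
    finally show ?thesis .
  qed
  have "c * ip V u u \<le> \<mu> * ip V u u" using q[of u] eig_qf[OF u(2)] by simp
  then show ?thesis using pos by (simp add: mult_le_cancel_right)
qed

lemma subgraph_facts:
  assumes "is_subgraph G S V E"
  shows "V \<subseteq> carrier G" "E \<subseteq> V \<times> V" "symrel E" "\<forall>(a, b)\<in>E. cay_edge G S a b"
  using assms unfolding is_subgraph_def symrel_def by auto

lemma Min_lower:
  fixes A :: "real set"
  assumes "finite A" "A \<noteq> {}" "\<And>a. a \<in> A \<Longrightarrow> c \<le> a"
  shows "c \<le> Min A"
  using assms by (simp add: Min_ge_iff)

context cay begin

lemma ball_mult: "x \<in> cay_ball G S n \<Longrightarrow> y \<in> cay_ball G S m \<Longrightarrow> x \<otimes> y \<in> cay_ball G S (n + m)"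
proof -
  assume x: "x \<in> cay_ball G S n" and y: "y \<in> cay_ball G S m"
  obtain ws where ws: "x = word_prod G ws" "set ws \<subseteq> S" "length ws \<le> n" using x unfolding cay_ball_def by blast
  obtain vs where vs: "y = word_prod G vs" "set vs \<subseteq> S" "length vs \<le> m" using y unfolding cay_ball_def by blast
  have "x \<otimes> y = word_prod G (ws @ vs)" using ws vs by (simp add: wp_append)
  moreover have "set (ws @ vs) \<subseteq> S" "length (ws @ vs) \<le> n + m" using ws vs by auto
  ultimately show ?thesis unfolding cay_ball_def by blast
qed

lemma S_ball: "s \<in> S \<Longrightarrow> s \<in> cay_ball G S 1"
  using ball_step[OF one_ball[of 0], of s] S_sub by auto

lemma gen_ball: "x \<in> generate G S \<Longrightarrow> \<exists>n. x \<in> cay_ball G S n"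
proof (induction rule: generate.induct)
  case one then show ?case using one_ball by blast
next
  case (incl h) then show ?case using S_ball by blast
next
  case (inv h) then show ?case using S_ball S_sym by blast
next
  case (eng h1 h2) then show ?case using ball_mult by blast
qed

lemma ball_unbounded:
  assumes gen: "generate G S = carrier G" and inf: "infinite (carrier G)"
  shows "\<exists>n. real (ball_vol G S n) > t"
proof (rule ccontr)
  assume "\<not> ?thesis"
  then have bd: "real (ball_vol G S n) \<le> t" for n by (simp add: not_less)
  define M where "M = nat \<lceil>t\<rceil>"
  obtain A where A: "A \<subseteq> carrier G" "finite A" "card A = Suc M"
    using infinite_arbitrarily_large[OF inf] by blast
  have "\<forall>a\<in>A. \<exists>n. a \<in> cay_ball G S n" using A(1) gen gen_ball by blast
  then obtain N where N: "\<forall>a\<in>A. a \<in> cay_ball G S (N a)" by metis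
  define n0 where "n0 = Max (N ` A)"
  have "A \<subseteq> cay_ball G S n0"
  proof
    fix a assume a: "a \<in> A"
    have "N a \<le> n0" unfolding n0_def using A(2) a by simp
    then show "a \<in> cay_ball G S n0" using ball_mono N a by blast
  qed
  then have "card A \<le> ball_vol G S n0" unfolding ball_vol_def by (rule card_mono[OF ball_finite])
  then have "real (Suc M) \<le> t" using bd[of n0] A(3) by linarith
  moreover have "t \<le> real M" unfolding M_def by linarith
  ultimately show False by simp
qed

lemma growth_inv_vol:
  assumes gen: "generate G S = carrier G" and inf: "infinite (carrier G)"
  shows "real (ball_vol G S (growth_inv G S t)) > t"
  unfolding growth_inv_def by (rule LeastI_ex[OF ball_unbounded[OF gen inf]])

lemma growth_inv_pos:
  assumes gen: "generate G S = carrier G" and inf: "infinite (carrier G)" and t: "t \<ge> 1"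
  shows "growth_inv G S t \<ge> 1"
proof (rule ccontr)
  assume "\<not> growth_inv G S t \<ge> 1"
  then have "growth_inv G S t = 0" by simp
  then have "real (ball_vol G S 0) > t" using growth_inv_vol[OF gen inf, of t] by simp
  then show False using t ball_vol0 by simp
qed

lemma partA:
  assumes gen: "generate G S = carrier G" and inf: "infinite (carrier G)"
    and sub: "is_subgraph G S V E" and V: "finite V" and conn: "graph_connected V E"
  shows "lowest_nz_eig V (lap_A (card S) V E) \<ge> (1/4) / real (growth_inv G S (2 * real (card V))) ^ 2"
proof -
  note sf = subgraph_facts[OF sub]
  define r where "r = growth_inv G S (2 * real (card V))"
  have Vne: "V \<noteq> {}" using conn unfolding graph_connected_def by simp
  then have cV: "card V \<ge> 1" using V by (simp add: Suc_le_eq card_gt_0_iff)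
  have vol: "real (ball_vol G S r) \<ge> 2 * real (card V)"
    using growth_inv_vol[OF gen inf, of "2 * real (card V)"] unfolding r_def by simp
  have r1: "r \<ge> 1" unfolding r_def by (rule growth_inv_pos[OF gen inf]) (use cV in simp)
  define c where "c = (1/4) / real r ^ 2"
  have cpos: "c > 0" using r1 unfolding c_def by simp
  let ?w = "\<lambda>_::'a. real (card S)"
  have q: "c * ip V f f \<le> qf ?w V E f" for f
  proof -
    have "ip V f f \<le> 4 * (real r)^2 * qf ?w V E f" by (rule FK[OF sf(1) V sf(2) sf(3) sf(4) vol])
    then show ?thesis unfolding c_def using r1 by (simp add: field_simps)
  qed
  define Eg where "Eg = {\<mu>. is_eigenvalue V (lapw ?w V E) \<mu> \<and> \<mu> \<noteq> 0}"
  have fin: "finite Eg" unfolding Eg_def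
    by (rule finite_subset[OF _ eig_finite[OF V sf(2) sf(3), of ?w]]) auto
  obtain lam where lam: "is_eigenvalue V (lapw ?w V E) lam" "\<And>f. qf ?w V E f \<ge> lam * ip V f f"
    by (rule min_eig_unconstr[OF V Vne sf(2) sf(3), where w="?w"]) (rule that)
  have "c \<le> lam" by (rule eig_lower_from_qf[OF V lam(1) q])
  then have "lam \<in> Eg" unfolding Eg_def using lam(1) cpos by auto
  then have ne: "Eg \<noteq> {}" by blast
  have "c \<le> Min Eg"
    by (rule Min_lower[OF fin ne]) (use eig_lower_from_qf[OF V _ q] in \<open>auto simp: Eg_def\<close>)
  then show ?thesis unfolding lowest_nz_eig_def lap_A_lapw c_def r_def Eg_def .
qed

lemma partN:
  assumes sub: "is_subgraph G S V E" and V: "finite V" and conn: "graph_connected V E"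
    and ex: "\<exists>\<mu>. is_eigenvalue V (lap_N V E) \<mu> \<and> \<mu> \<noteq> 0"
  shows "lowest_nz_eig V (lap_N V E) \<ge> 1 / real (card V) ^ 2"
proof -
  note sf = subgraph_facts[OF sub]
  let ?w = "\<lambda>x. real (gdeg E x)"
  define Eg where "Eg = {\<mu>. is_eigenvalue V (lapw ?w V E) \<mu> \<and> \<mu> \<noteq> 0}"
  have fin: "finite Eg" unfolding Eg_def
    by (rule finite_subset[OF _ eig_finite[OF V sf(2) sf(3), of ?w]]) auto
  have ne: "Eg \<noteq> {}" using ex unfolding Eg_def lap_N_lapw by blast
  have "1 / real (card V) ^ 2 \<le> Min Eg"
    by (rule Min_lower[OF fin ne]) (use N_eig_lower[OF V sf(2) sf(3) conn] in \<open>auto simp: Eg_def\<close>)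
  then show ?thesis unfolding lowest_nz_eig_def lap_N_lapw Eg_def .
qed

end

context cay begin

definition wl :: "'a \<Rightarrow> nat" where "wl x = (LEAST l. x \<in> cay_ball G S l)"

lemma wl_le: "x \<in> cay_ball G S l \<Longrightarrow> wl x \<le> l"
  unfolding wl_def by (rule Least_le)

lemma wl_in: "x \<in> cay_ball G S l \<Longrightarrow> x \<in> cay_ball G S (wl x)"
  unfolding wl_def by (rule LeastI)

lemma wl_step: "x \<in> cay_ball G S l \<Longrightarrow> s \<in> S \<Longrightarrow> wl (x \<otimes> s) \<le> Suc (wl x)"
  by (rule wl_le[OF ball_step[OF wl_in]])

lemma induced_facts:
  fixes n :: nat
  defines "Vb \<equiv> cay_ball G S n"
  shows "induced_edges G S Vb \<subseteq> Vb \<times> Vb" "symrel (induced_edges G S Vb)"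
    "\<forall>(a, b)\<in>induced_edges G S Vb. cay_edge G S a b"
proof -
  show "induced_edges G S Vb \<subseteq> Vb \<times> Vb" unfolding induced_edges_def by auto
  show "\<forall>(a, b)\<in>induced_edges G S Vb. cay_edge G S a b" unfolding induced_edges_def by auto
  show "symrel (induced_edges G S Vb)" unfolding symrel_def
  proof (intro ballI, clarify)
    fix x y assume "(x, y) \<in> induced_edges G S Vb"
    then have xy: "x \<in> Vb" "y \<in> Vb" "x \<in> carrier G" "y \<in> carrier G" and "\<exists>s\<in>S. y = x \<otimes> s"
      unfolding induced_edges_def cay_edge_def by auto
    then obtain s where s: "s \<in> S" "y = x \<otimes> s" by blast
    have sc: "s \<in> carrier G" using s S_sub by auto
    have "x = y \<otimes> inv s" using s(2) xy(3) sc by (simp add: m_assoc)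
    moreover have "inv s \<in> S" using S_sym s by auto
    ultimately show "(y, x) \<in> induced_edges G S Vb" unfolding induced_edges_def cay_edge_def using xy by auto
  qed
qed

lemma partD:
  assumes gen: "generate G S = carrier G" and inf: "infinite (carrier G)" and n: "n > 0"
  shows "lowest_nz_eig (cay_ball G S n) (lap_D (card S) (cay_ball G S n) (induced_edges G S (cay_ball G S n)))
     \<le> (2 * real (card S) + 1) * real (ball_vol G S n) / (real n ^ 2 * real (ball_vol G S (n div 2)))"
proof -
  define Vb where "Vb = cay_ball G S n"
  define Eb where "Eb = induced_edges G S Vb"
  let ?k = "real (card S)"
  let ?wD = "\<lambda>x. 2 * ?k - real (gdeg Eb x)"
  let ?wA = "\<lambda>_::'a. ?k"
  have V: "finite Vb" unfolding Vb_def by (rule ball_finite)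
  have VC: "Vb \<subseteq> carrier G" unfolding Vb_def by (rule ball_carrier)
  have Vne: "Vb \<noteq> {}" unfolding Vb_def using one_ball by blast
  have EV: "Eb \<subseteq> Vb \<times> Vb" and sy: "symrel Eb" and cay: "\<forall>(a, b)\<in>Eb. cay_edge G S a b"
    unfolding Eb_def Vb_def using induced_facts by auto
  have dle: "gdeg Eb x \<le> card S" if "x \<in> Vb" for x using gdeg_le[OF _ cay] that VC by auto
  define r where "r = growth_inv G S (2 * real (card Vb))"
  have vol: "real (ball_vol G S r) \<ge> 2 * real (card Vb)"
    using growth_inv_vol[OF gen inf, of "2 * real (card Vb)"] unfolding r_def by simp
  have cV: "card Vb \<ge> 1" using V Vne by (simp add: Suc_le_eq card_gt_0_iff)
  have r1: "r \<ge> 1" unfolding r_def by (rule growth_inv_pos[OF gen inf]) (use cV in simp)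
  define c where "c = (1/4) / real r ^ 2"
  have cpos: "c > 0" using r1 unfolding c_def by simp
  have qDA: "qf ?wA Vb Eb g \<le> qf ?wD Vb Eb g" for g
  proof -
    have "(\<Sum>x\<in>Vb. (?wA x - real (gdeg Eb x)) * (g x)^2) \<le> (\<Sum>x\<in>Vb. (?wD x - real (gdeg Eb x)) * (g x)^2)"
    proof (rule sum_mono)
      fix x assume "x \<in> Vb"
      then have "real (gdeg Eb x) \<le> ?k" using dle by simp
      then show "(?wA x - real (gdeg Eb x)) * (g x)^2 \<le> (?wD x - real (gdeg Eb x)) * (g x)^2"
        by (intro mult_right_mono) auto
    qed
    then show ?thesis using qf_formula[OF V EV sy, of ?wA g] qf_formula[OF V EV sy, of ?wD g] by simp
  qed
  have q: "c * ip Vb g g \<le> qf ?wD Vb Eb g" for g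
  proof -
    have "ip Vb g g \<le> 4 * (real r)^2 * qf ?wA Vb Eb g" by (rule FK[OF VC V EV sy cay vol])
    then have "c * ip Vb g g \<le> qf ?wA Vb Eb g" unfolding c_def using r1 by (simp add: field_simps)
    then show ?thesis using qDA[of g] by simp
  qed
  obtain lam where lam: "is_eigenvalue Vb (lapw ?wD Vb Eb) lam" "\<And>f. qf ?wD Vb Eb f \<ge> lam * ip Vb f f"
    by (rule min_eig_unconstr[OF V Vne EV sy, where w="?wD"]) (rule that)
  have "c \<le> lam" by (rule eig_lower_from_qf[OF V lam(1) q])
  then have lampos: "lam > 0" using cpos by simp
  define Eg where "Eg = {\<mu>. is_eigenvalue Vb (lapw ?wD Vb Eb) \<mu> \<and> \<mu> \<noteq> 0}"
  have fin: "finite Eg" unfolding Eg_def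
    by (rule finite_subset[OF _ eig_finite[OF V EV sy, of ?wD]]) auto
  have "lam \<in> Eg" unfolding Eg_def using lam(1) lampos by auto
  then have minle: "Min Eg \<le> lam" using fin by simp
  define m where "m = n div 2"
  define f where "f x = real n - real (wl x)" for x
  have wln: "wl x \<le> n" if "x \<in> Vb" for x using that wl_le unfolding Vb_def by blast
  have term0: "(?wD x - real (gdeg Eb x)) * (f x)^2 \<le> 0" if x: "x \<in> Vb" for x
  proof (cases "wl x = n")
    case True then show ?thesis by (simp add: f_def)
  next
    case False
    then have lt: "wl x < n" using wln[OF x] by simp
    have xc: "x \<in> carrier G" using x VC by auto
    have sub: "(\<lambda>s. x \<otimes> s) ` S \<subseteq> {y. (x, y) \<in> Eb}"
    proof
      fix y assume "y \<in> (\<lambda>s. x \<otimes> s) ` S"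
      then obtain s where s: "s \<in> S" "y = x \<otimes> s" by blast
      have "y \<in> cay_ball G S (Suc (wl x))" using s ball_step[OF wl_in[OF x[unfolded Vb_def]]] by simp
      then have "y \<in> Vb" unfolding Vb_def using ball_mono[of "Suc (wl x)" n] lt by auto
      moreover have "y \<in> carrier G" using s xc S_sub by auto
      ultimately show "y \<in> {y. (x, y) \<in> Eb}" unfolding Eb_def induced_edges_def cay_edge_def
        using x xc s by auto
    qed
    have finN: "finite {y. (x, y) \<in> Eb}" using V EV by (auto intro: finite_subset)
    have "card S = card ((\<lambda>s. x \<otimes> s) ` S)" using card_image[OF inj_mult_S[OF xc]] by simp
    also have "\<dots> \<le> gdeg Eb x" unfolding gdeg_def by (rule card_mono[OF finN sub])
    finally have "?k \<le> real (gdeg Eb x)" by simp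
    then show ?thesis by (intro mult_nonpos_nonneg) auto
  qed
  have diff1: "(f a - f b)^2 \<le> 1" if ab: "(a, b) \<in> Eb" for a b
  proof -
    have a: "a \<in> Vb" and b: "b \<in> Vb" using ab EV by auto
    obtain s where s: "s \<in> S" "b = a \<otimes> s" and ac: "a \<in> carrier G" using ab cay unfolding cay_edge_def by blast
    have sc: "s \<in> carrier G" using s S_sub by auto
    have h1: "wl b \<le> Suc (wl a)" using wl_step[OF a[unfolded Vb_def] s(1)] s(2) by simp
    have "a = b \<otimes> inv s" using s(2) ac sc by (simp add: m_assoc)
    then have h2: "wl a \<le> Suc (wl b)" using wl_step[OF b[unfolded Vb_def], of "inv s"] S_sym s(1) by simp
    have "\<bar>f a - f b\<bar> \<le> 1" unfolding f_def using h1 h2 by linarith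
    then show ?thesis by (metis abs_le_square_iff abs_one one_power2)
  qed
  have cardE: "real (card Eb) \<le> ?k * real (card Vb)"
  proof -
    have "Eb \<subseteq> (\<lambda>p. (fst p, fst p \<otimes> snd p)) ` (Vb \<times> S)"
    proof
      fix p assume p: "p \<in> Eb"
      obtain a b where ab: "p = (a, b)" by (cases p)
      then obtain s where "s \<in> S" "b = a \<otimes> s" using p cay unfolding cay_edge_def by blast
      moreover have "a \<in> Vb" using p ab EV by auto
      ultimately show "p \<in> (\<lambda>p. (fst p, fst p \<otimes> snd p)) ` (Vb \<times> S)" using ab by force
    qed
    then have "card Eb \<le> card ((\<lambda>p. (fst p, fst p \<otimes> snd p)) ` (Vb \<times> S))"
      by (rule card_mono[rotated]) (use V S_fin in simp)
    also have "\<dots> \<le> card (Vb \<times> S)" by (rule card_image_le) (use V S_fin in simp)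
    also have "\<dots> = card Vb * card S" by (simp add: card_cartesian_product)
    finally show ?thesis by (simp add: mult.commute flip: of_nat_mult)
  qed
  have qf_up: "qf ?wD Vb Eb f \<le> ?k * real (ball_vol G S n) / 2"
  proof -
    have "qf ?wD Vb Eb f = (\<Sum>x\<in>Vb. (?wD x - real (gdeg Eb x)) * (f x)^2) + (\<Sum>p\<in>Eb. (f (fst p) - f (snd p))^2) / 2"
      by (rule qf_formula[OF V EV sy])
    also have "(\<Sum>x\<in>Vb. (?wD x - real (gdeg Eb x)) * (f x)^2) \<le> 0"
      by (rule sum_nonpos) (rule term0)
    also have "(\<Sum>p\<in>Eb. (f (fst p) - f (snd p))^2) \<le> (\<Sum>p\<in>Eb. 1)"
      by (rule sum_mono) (use diff1 in auto)
    also have "(\<Sum>p\<in>Eb. (1::real)) = real (card Eb)" by simp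
    finally have "qf ?wD Vb Eb f \<le> real (card Eb) / 2" by simp
    also have "\<dots> \<le> ?k * real (card Vb) / 2" using cardE by simp
    finally show ?thesis unfolding Vb_def ball_vol_def .
  qed
  have ip_low: "real (ball_vol G S m) * (real n / 2)^2 \<le> ip Vb f f"
  proof -
    have Bm: "cay_ball G S m \<subseteq> Vb" unfolding Vb_def m_def by (rule ball_mono) simp
    have nm: "real n / 2 \<le> real n - real m" unfolding m_def by linarith
    have "real (ball_vol G S m) * (real n / 2)^2 = (\<Sum>x\<in>cay_ball G S m. (real n / 2)^2)"
      unfolding ball_vol_def by simp
    also have "\<dots> \<le> (\<Sum>x\<in>cay_ball G S m. (f x)^2)"
    proof (rule sum_mono)
      fix x assume x: "x \<in> cay_ball G S m"
      have "wl x \<le> m" by (rule wl_le[OF x])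
      then have "real n / 2 \<le> f x" unfolding f_def using nm by linarith
      then show "(real n / 2)^2 \<le> (f x)^2" by (rule power_mono) simp
    qed
    also have "\<dots> \<le> (\<Sum>x\<in>Vb. (f x)^2)" by (rule sum_mono2[OF V Bm]) simp
    also have "\<dots> = ip Vb f f" by (simp add: ip_def power2_eq_square)
    finally show ?thesis .
  qed
  have vm: "real (ball_vol G S m) \<ge> 1" using ball_vol_pos[of m] by simp
  have npos: "real n > 0" using n by simp
  define P where "P = real (ball_vol G S m) * (real n / 2)^2"
  have Ppos: "P > 0" unfolding P_def using vm npos by simp
  have "lam * P \<le> lam * ip Vb f f" using ip_low lampos unfolding P_def by (simp add: mult_left_mono)
  also have "\<dots> \<le> qf ?wD Vb Eb f" by (rule lam(2))
  also have "\<dots> \<le> ?k * real (ball_vol G S n) / 2" by (rule qf_up)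
  finally have "lam \<le> (?k * real (ball_vol G S n) / 2) / P" using Ppos by (simp add: field_simps)
  also have "\<dots> = 2 * ?k * real (ball_vol G S n) / (real n ^ 2 * real (ball_vol G S m))"
    unfolding P_def using vm npos by (simp add: field_simps power2_eq_square)
  also have "\<dots> \<le> (2 * ?k + 1) * real (ball_vol G S n) / (real n ^ 2 * real (ball_vol G S m))"
    using vm npos by (intro divide_right_mono mult_right_mono) auto
  finally have "lam \<le> (2 * ?k + 1) * real (ball_vol G S n) / (real n ^ 2 * real (ball_vol G S m))" .
  then have "Min Eg \<le> (2 * ?k + 1) * real (ball_vol G S n) / (real n ^ 2 * real (ball_vol G S m))"
    using minle by simp
  then show ?thesis unfolding lowest_nz_eig_def lap_D_lapw Eg_def Eb_def Vb_def m_def .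
qed

end

lemma sum_real_id: "(\<Sum>i<n. real i) = real n * (real n - 1) / 2"
  by (induction n) (simp_all add: field_simps)

lemma sum_real_sq: "(\<Sum>i<n. (real i)^2) = (real n - 1) * real n * (2 * real n - 1) / 6"
  by (induction n) (simp_all add: field_simps power2_eq_square)

lemma sum_sq_center: "(\<Sum>i<n. (real i - (real n - 1) / 2)^2) = real n * (real n - 1) * (real n + 1) / 12"
proof -
  let ?c = "(real n - 1) / 2"
  have "(\<Sum>i<n. (real i - ?c)^2) = (\<Sum>i<n. (real i)^2 - (2 * ?c) * real i + ?c^2)"
    by (rule sum.cong) (simp_all add: power2_diff algebra_simps)
  also have "\<dots> = (\<Sum>i<n. (real i)^2) - (2 * ?c) * (\<Sum>i<n. real i) + real n * ?c^2"
    by (simp add: sum.distrib sum_subtractf sum_distrib_left)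
  also have "\<dots> = real n * (real n - 1) * (real n + 1) / 12"
    unfolding sum_real_id sum_real_sq by (simp add: field_simps power2_eq_square)
  finally show ?thesis .
qed

lemma sum_center: "(\<Sum>i<n. (real i - (real n - 1) / 2)) = 0"
proof -
  have "(\<Sum>i<n. (real i - (real n - 1) / 2)) = (\<Sum>i<n. real i) - real n * ((real n - 1) / 2)"
    by (simp add: sum_subtractf)
  also have "\<dots> = 0" unfolding sum_real_id by (simp add: field_simps)
  finally show ?thesis .
qed

lemma sum_distinct_list: "distinct xs \<Longrightarrow> (\<Sum>v\<in>set xs. h v) = (\<Sum>i<length xs. h (xs ! i))"
proof -
  assume d: "distinct xs"
  have s: "set xs = (!) xs ` {..<length xs}" by (auto simp: set_conv_nth)
  have inj: "inj_on ((!) xs) {..<length xs}" by (rule inj_on_nth[OF d]) simp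
  show ?thesis unfolding s by (simp add: sum.reindex[OF inj])
qed

lemma path_connected:
  assumes d: "distinct xs" and n: "length xs = n" and n0: "n > 0"
    and E: "E = {(xs ! i, xs ! Suc i) | i. Suc i < n} \<union> {(xs ! Suc i, xs ! i) | i. Suc i < n}"
  shows "graph_connected (set xs) E"
proof -
  have fw: "(xs ! i, xs ! (i + k)) \<in> E\<^sup>* \<and> (xs ! (i + k), xs ! i) \<in> E\<^sup>*" if "i + k < n" for i k
    using that
  proof (induction k)
    case 0 then show ?case by simp
  next
    case (Suc k)
    then have ih: "(xs ! i, xs ! (i + k)) \<in> E\<^sup>*" "(xs ! (i + k), xs ! i) \<in> E\<^sup>*" by auto
    have e1: "(xs ! (i + k), xs ! Suc (i + k)) \<in> E" unfolding E using Suc.prems by auto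
    have e2: "(xs ! Suc (i + k), xs ! (i + k)) \<in> E" unfolding E using Suc.prems by auto
    show ?case using ih e1 e2 by (auto intro: rtrancl_into_rtrancl converse_rtrancl_into_rtrancl)
  qed
  show ?thesis unfolding graph_connected_def
  proof (intro conjI ballI)
    show "set xs \<noteq> {}" using n n0 by auto
    fix x y assume x: "x \<in> set xs" and y: "y \<in> set xs"
    obtain i where i: "i < n" "x = xs ! i" using x n by (auto simp: set_conv_nth)
    obtain j where j: "j < n" "y = xs ! j" using y n by (auto simp: set_conv_nth)
    show "(x, y) \<in> E\<^sup>*"
    proof (cases "i \<le> j")
      case True
      then show ?thesis using fw[of i "j - i"] i j by simp
    next
      case False
      then show ?thesis using fw[of j "i - j"] i j by simp
    qed
  qed
qed

context cay begin

lemma partPath: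
  assumes n0: "n > 0" and sub: "is_subgraph G S V E" and path: "is_path_graph V E n"
    and ex: "\<exists>\<mu>. is_eigenvalue V (lap_N V E) \<mu> \<and> \<mu> \<noteq> 0"
  shows "lowest_nz_eig V (lap_N V E) \<le> 12 / real n ^ 2"
proof -
  note sf = subgraph_facts[OF sub]
  obtain xs where xs: "distinct xs" "length xs = n" "V = set xs"
    and E: "E = {(xs ! i, xs ! Suc i) | i. Suc i < n} \<union> {(xs ! Suc i, xs ! i) | i. Suc i < n}"
    using path unfolding is_path_graph_def by blast
  have V: "finite V" using xs by simp
  let ?w = "\<lambda>x. real (gdeg E x)"
  have n2: "n \<ge> 2"
  proof (rule ccontr)
    assume "\<not> n \<ge> 2"
    then have n1: "n = 1" using n0 by simp
    then have E0: "E = {}" unfolding E by auto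
    obtain \<mu> where mu: "is_eigenvalue V (lap_N V E) \<mu>" "\<mu> \<noteq> 0" using ex by blast
    obtain u x where "x \<in> V" "u x \<noteq> 0" "lap_N V E u x = \<mu> * u x"
      using mu(1) unfolding is_eigenvalue_def by blast
    moreover have "lap_N V E u x = 0" unfolding lap_N_def adj_op_def gdeg_def E0 by simp
    ultimately show False using mu(2) by simp
  qed
  have conn: "graph_connected V E" unfolding xs(3) by (rule path_connected[OF xs(1,2) n0 E])
  have x01: "xs ! 0 \<in> V" "xs ! 1 \<in> V" "xs ! 0 \<noteq> xs ! 1"
    using xs n2 by (auto simp: nth_eq_iff_index_eq)
  have L1: "\<forall>x\<in>V. lapw ?w V E (\<lambda>_. 1) x = 0" using lapN_one[OF sf(2)] by simp
  obtain lam g where lg: "is_eigenvalue V (lapw ?w V E) lam" "ip V g g = 1" "ip V (\<lambda>_. 1) g = 0"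
      "qf ?w V E g = lam" "\<And>f. ip V (\<lambda>_. 1) f = 0 \<Longrightarrow> qf ?w V E f \<ge> lam * ip V f f"
    by (rule min_eig_sum0[OF V x01 sf(2) sf(3) L1]) (rule that)
  have qfD: "qf ?w V E f = (\<Sum>p\<in>E. (f (fst p) - f (snd p))^2) / 2" for f
    using qf_formula[OF V sf(2) sf(3), of ?w f] by simp
  have "ip V g g \<le> (real (card V))^2 * qf ?w V E g"
    using poincare[OF V sf(2) conn lg(3)] unfolding qfD .
  then have "1 \<le> (real (card V))^2 * lam" using lg(2,4) by simp
  then have lampos: "lam > 0" by (smt (verit) mult_nonneg_nonpos zero_le_power2)
  define Eg where "Eg = {\<mu>. is_eigenvalue V (lapw ?w V E) \<mu> \<and> \<mu> \<noteq> 0}"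
  have fin: "finite Eg" unfolding Eg_def
    by (rule finite_subset[OF _ eig_finite[OF V sf(2) sf(3), of ?w]]) auto
  have "lam \<in> Eg" unfolding Eg_def using lg(1) lampos by auto
  then have minle: "Min Eg \<le> lam" using fin by simp
  define idx where "idx v = inv_into {..<n} ((!) xs) v" for v
  define f where "f v = real (idx v) - (real n - 1) / 2" for v
  have injn: "inj_on ((!) xs) {..<n}" using xs by (intro inj_on_nth) auto
  have fi: "f (xs ! i) = real i - (real n - 1) / 2" if "i < n" for i
    unfolding f_def idx_def using inv_into_f_f[OF injn] that by simp
  have s0: "ip V (\<lambda>_. 1) f = 0"
  proof -
    have "ip V (\<lambda>_. 1) f = (\<Sum>i<n. f (xs ! i))"
      unfolding ip_def xs(3) using sum_distinct_list[OF xs(1), of f] xs(2) by simp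
    also have "\<dots> = (\<Sum>i<n. real i - (real n - 1) / 2)" by (rule sum.cong) (simp_all add: fi)
    also have "\<dots> = 0" by (rule sum_center)
    finally show ?thesis .
  qed
  have ipf: "ip V f f = real n * (real n - 1) * (real n + 1) / 12"
  proof -
    have "ip V f f = (\<Sum>i<n. (f (xs ! i))^2)"
      unfolding ip_def xs(3) using sum_distinct_list[OF xs(1), of "\<lambda>v. f v * f v"] xs(2)
      by (simp add: power2_eq_square)
    also have "\<dots> = (\<Sum>i<n. (real i - (real n - 1) / 2)^2)" by (rule sum.cong) (simp_all add: fi)
    also have "\<dots> = real n * (real n - 1) * (real n + 1) / 12" by (rule sum_sq_center)
    finally show ?thesis .
  qed
  have Dbound: "(\<Sum>p\<in>E. (f (fst p) - f (snd p))^2) \<le> 2 * (real n - 1)"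
  proof -
    define A where "A = (\<lambda>i. (xs ! i, xs ! Suc i)) ` {i. Suc i < n}"
    define B where "B = (\<lambda>i. (xs ! Suc i, xs ! i)) ` {i. Suc i < n}"
    have EAB: "E = A \<union> B" unfolding E A_def B_def by blast
    have I: "{i. Suc i < n} = {..<n - 1}" by auto
    have finI: "finite {i. Suc i < n}" unfolding I by simp
    have cI: "card {i. Suc i < n} = n - 1" unfolding I by simp
    let ?h = "\<lambda>p. (f (fst p) - f (snd p))^2"
    have sA: "sum ?h A \<le> real n - 1"
    proof -
      have "sum ?h A \<le> sum (?h \<circ> (\<lambda>i. (xs ! i, xs ! Suc i))) {i. Suc i < n}"
        unfolding A_def by (rule sum_image_le[OF finI]) simp
      also have "\<dots> = (\<Sum>i\<in>{i. Suc i < n}. 1)"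
        by (rule sum.cong) (simp_all add: fi)
      also have "\<dots> = real n - 1" using cI n0 by simp
      finally show ?thesis .
    qed
    have sB: "sum ?h B \<le> real n - 1"
    proof -
      have "sum ?h B \<le> sum (?h \<circ> (\<lambda>i. (xs ! Suc i, xs ! i))) {i. Suc i < n}"
        unfolding B_def by (rule sum_image_le[OF finI]) simp
      also have "\<dots> = (\<Sum>i\<in>{i. Suc i < n}. 1)"
        by (rule sum.cong) (simp_all add: fi)
      also have "\<dots> = real n - 1" using cI n0 by simp
      finally show ?thesis .
    qed
    have fA: "finite A" "finite B" unfolding A_def B_def using finI by auto
    have "sum ?h (A \<union> B) + sum ?h (A \<inter> B) = sum ?h A + sum ?h B" by (rule sum.union_inter[OF fA])
    moreover have "sum ?h (A \<inter> B) \<ge> 0" by (rule sum_nonneg) simp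
    ultimately have "sum ?h (A \<union> B) \<le> sum ?h A + sum ?h B" by linarith
    then show ?thesis unfolding EAB using sA sB by simp
  qed
  have npos: "real n \<ge> 2" using n2 by simp
  have "lam * (real n * (real n - 1) * (real n + 1) / 12) \<le> real n - 1"
  proof -
    have "lam * ip V f f \<le> qf ?w V E f" by (rule lg(5)[OF s0])
    also have "\<dots> \<le> real n - 1" unfolding qfD using Dbound by simp
    finally show ?thesis unfolding ipf .
  qed
  then have X: "(real n - 1) * (lam * real n * (real n + 1)) \<le> (real n - 1) * 12"
    by (simp add: field_simps)
  have pos1: "real n - 1 > 0" using npos by simp
  have "lam * real n * (real n + 1) \<le> 12" by (rule mult_le_cancel_left_pos[OF pos1, THEN iffD1, OF X])
  then have lam_le: "lam * (real n * (real n + 1)) \<le> 12" by (simp add: mult.assoc)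
  have "lam * real n ^ 2 \<le> lam * (real n * (real n + 1))"
    using lampos npos by (intro mult_left_mono) (auto simp: power2_eq_square)
  then have "lam * real n ^ 2 \<le> 12" using lam_le by simp
  then have "lam \<le> 12 / real n ^ 2" using npos by (simp add: field_simps)
  then have "Min Eg \<le> 12 / real n ^ 2" using minle by simp
  then show ?thesis unfolding lowest_nz_eig_def lap_N_lapw Eg_def .
qed

end

theorem proposition3p5:
  fixes G :: "('a, 'b) monoid_scheme" and S :: "'a set"
  assumes grp: "group G"
    and S_sub: "S \<subseteq> carrier G"
    and S_fin: "finite S"
    and S_sym: "\<forall>s\<in>S. inv\<^bsub>G\<^esub> s \<in> S"
    and S_id: "\<one>\<^bsub>G\<^esub> \<notin> S"
    and S_gen: "generate G S = carrier G"
    and G_inf: "infinite (carrier G)"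
  shows "\<exists>\<alpha>D \<beta>D \<gamma>D \<alpha>N \<gamma>N :: real.
           \<alpha>D > 0 \<and> \<beta>D > 0 \<and> \<gamma>D > 0 \<and> \<alpha>N > 0 \<and> \<gamma>N > 0 \<and>
           (\<forall>V' E'. is_subgraph G S V' E' \<and> finite V' \<and> graph_connected V' E' \<longrightarrow>
              lowest_nz_eig V' (lap_A (card S) V' E')
                \<ge> \<alpha>D / real (growth_inv G S (\<beta>D * real (card V'))) ^ 2
            \<and> ((\<exists>\<mu>. is_eigenvalue V' (lap_N V' E') \<mu> \<and> \<mu> \<noteq> 0) \<longrightarrow>
                 lowest_nz_eig V' (lap_N V' E') \<ge> \<alpha>N / real (card V') ^ 2)) \<and>
           (\<forall>n::nat. n > 0 \<longrightarrow>
              lowest_nz_eig (cay_ball G S n) (lap_D (card S) (cay_ball G S n) (induced_edges G S (cay_ball G S n)))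
                \<le> \<gamma>D * real (ball_vol G S n) / (real n ^ 2 * real (ball_vol G S (n div 2)))) \<and>
           (\<forall>n::nat. \<forall>V' E'. n > 0 \<and> is_subgraph G S V' E' \<and> is_path_graph V' E' n \<and>
              (\<exists>\<mu>. is_eigenvalue V' (lap_N V' E') \<mu> \<and> \<mu> \<noteq> 0) \<longrightarrow>
              lowest_nz_eig V' (lap_N V' E') \<le> \<gamma>N / real n ^ 2)"
proof -
  interpret C: cay G S
    unfolding cay_def cay_axioms_def using grp S_sub S_fin S_sym S_id by auto
  show ?thesis
  proof (intro exI conjI allI impI)
    show "(1/4::real) > 0" "(2::real) > 0" "2 * real (card S) + 1 > 0" "(1::real) > 0" "(12::real) > 0"
      by simp_all
  next
    fix V' E' assume h: "is_subgraph G S V' E' \<and> finite V' \<and> graph_connected V' E'"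
    show "lowest_nz_eig V' (lap_A (card S) V' E') \<ge> (1/4) / real (growth_inv G S (2 * real (card V'))) ^ 2"
      using C.partA[OF S_gen G_inf] h by blast
  next
    fix V' E' assume h: "is_subgraph G S V' E' \<and> finite V' \<and> graph_connected V' E'"
      and ex: "\<exists>\<mu>. is_eigenvalue V' (lap_N V' E') \<mu> \<and> \<mu> \<noteq> 0"
    show "lowest_nz_eig V' (lap_N V' E') \<ge> 1 / real (card V') ^ 2"
      using C.partN h ex by blast
  next
    fix n :: nat assume n: "n > 0"
    show "lowest_nz_eig (cay_ball G S n) (lap_D (card S) (cay_ball G S n) (induced_edges G S (cay_ball G S n)))
                \<le> (2 * real (card S) + 1) * real (ball_vol G S n) / (real n ^ 2 * real (ball_vol G S (n div 2)))"
      by (rule C.partD[OF S_gen G_inf n])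
  next
    fix n :: nat and V' E'
    assume h: "n > 0 \<and> is_subgraph G S V' E' \<and> is_path_graph V' E' n \<and>
              (\<exists>\<mu>. is_eigenvalue V' (lap_N V' E') \<mu> \<and> \<mu> \<noteq> 0)"
    show "lowest_nz_eig V' (lap_N V' E') \<le> 12 / real n ^ 2"
      using C.partPath h by blast
  qed
qed

end
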